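(* Consider the SGLD algorithm and assumptions of the following context, with $T=nK$ iterations for an integer $K\ge2$, step sizes $\eta_{(t)}=c/t$ for a constant $c>0$, noise levels $\sigma_{(t)}=\sqrt{\eta_{(t)}}$, and "without replacement" sampling: for each epoch $k=1,\dots,K$, the indices $(U_{(t)})_{t=(k-1)n+1}^{kn}$ form a (random) permutation of $\{1,\dots,n\}$, so each training sample is used exactly once per epoch. Then $$|\mathrm{gen}(\mu,P_{W|S})|\le\frac{RL\sqrt c}{n}\sum_{i=1}^n\sqrt{\frac1i+\frac{\log(K-1)+1}{n}}.$$
   Context: SGLD on $\mathcal W=\mathbb R^d$ with loss $\ell(w,z)$ differentiable in $w$: $S=(Z_1,\dots,Z_n)$ i.i.d. from $\mu$, fixed $W_{(0)}$, and $W_{(t)}=W_{(t-1)}-\eta_{(t)}\nabla_w\ell(W_{(t-1)},Z_{U_{(t)}})+\sigma_{(t)}\xi_{(t)}$ for $t=1,\dots,T$, with $\xi_{(t)}$ i.i.d. $\mathcal N(0,I_d)$, the index sequence $U^{(T)}$ random, and $S$, $U^{(T)}$, $(\xi_{(t)})$ mutually independent; output $W=W_{(T)}$. Assumptions: for every $w$, $\ell(w,Z)$ with $Z\sim\mu$ is $R$-sub-Gaussian (i.e. $\log\mathbb E[e^{\lambda(X-\mathbb EX)}]\le R^2\lambda^2/2$ for all real $\lambda$), and $\sup_{w,z}\|\nabla_w\ell(w,z)\|_2\le L$. Generalization error $\mathrm{gen}(\mu,P_{W|S})=\mathbb E[L_\mu(W)-L_S(W)]$ with $L_\mu(w)=\mathbb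 E_{Z\sim\mu}\ell(w,Z)$, $L_S(w)=\frac1n\sum_i\ell(w,Z_i)$. *)

theory Defs
  imports "HOL-Probability.Probability"
begin

definition subgaussian :: "'z measure \<Rightarrow> ('z \<Rightarrow> real) \<Rightarrow> real \<Rightarrow> bool" where
  "subgaussian M X R \<longleftrightarrow> integrable M X \<and>
     (\<forall>l::real. integrable M (\<lambda>z. exp (l * (X z - (\<integral>y. X y \<partial>M)))) \<and>
        ln (\<integral>z. exp (l * (X z - (\<integral>y. X y \<partial>M))) \<partial>M) \<le> R\<^sup>2 * l\<^sup>2 / 2)"

definition std_gauss :: "'a::euclidean_space measure" where
  "std_gauss = density lborel
     (\<lambda>x::'a. ennreal ((2 * pi) powr (- real DIM('a) / 2) * exp (- (norm x)\<^sup>2 / 2)))"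

primrec sgld_traj :: "'a::real_normed_vector \<Rightarrow> (nat \<Rightarrow> real) \<Rightarrow> (nat \<Rightarrow> real) \<Rightarrow>
    ('a \<Rightarrow> 'z \<Rightarrow> 'a) \<Rightarrow> (nat \<Rightarrow> 'z) \<Rightarrow> (nat \<Rightarrow> nat) \<Rightarrow> (nat \<Rightarrow> 'a) \<Rightarrow> nat \<Rightarrow> 'a" where
  "sgld_traj w0 eta sg g s u xi 0 = w0"
| "sgld_traj w0 eta sg g s u xi (Suc t) =
     sgld_traj w0 eta sg g s u xi t
     - eta (Suc t) *\<^sub>R g (sgld_traj w0 eta sg g s u xi t) (s (u (Suc t)))
     + sg (Suc t) *\<^sub>R xi (Suc t)"

definition pop_risk :: "'z measure \<Rightarrow> ('a \<Rightarrow> 'z \<Rightarrow> real) \<Rightarrow> 'a \<Rightarrow> real" where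
  "pop_risk \<mu> loss w = (\<integral>z. loss w z \<partial>\<mu>)"

definition emp_risk :: "('a \<Rightarrow> 'z \<Rightarrow> real) \<Rightarrow> nat \<Rightarrow> (nat \<Rightarrow> 'z) \<Rightarrow> 'a \<Rightarrow> real" where
  "emp_risk loss n s w = (\<Sum>i=1..n. loss w (s i)) / real n"

definition sgld_gen :: "'z measure \<Rightarrow> ('a::euclidean_space \<Rightarrow> 'z \<Rightarrow> real) \<Rightarrow> ('a \<Rightarrow> 'z \<Rightarrow> 'a) \<Rightarrow>
    'a \<Rightarrow> (nat \<Rightarrow> real) \<Rightarrow> (nat \<Rightarrow> real) \<Rightarrow> (nat \<Rightarrow> nat) pmf \<Rightarrow> nat \<Rightarrow> nat \<Rightarrow> real" where
  "sgld_gen \<mu> loss g w0 eta sg PU n T =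
     (\<integral>(s, u, xi). (let W = sgld_traj w0 eta sg g s u xi T in
                      pop_risk \<mu> loss W - emp_risk loss n s W)
       \<partial>(PiM {1..n} (\<lambda>_. \<mu>) \<Otimes>\<^sub>M (measure_pmf PU \<Otimes>\<^sub>M PiM {1..T} (\<lambda>_. std_gauss))))"

end

theory Submission
  imports Defs
begin

definition gd :: "'a::euclidean_space \<Rightarrow> real" where
  "gd x = (2 * pi) powr (- real DIM('a) / 2) * exp (- (norm x)\<^sup>2 / 2)"

lemma gd_pos: "gd x > 0" by (simp add: gd_def)

lemma gd_measurable[measurable]: "gd \<in> borel_measurable borel"
  unfolding gd_def by measurable

lemma std_gauss_gd: "std_gauss = density lborel (\<lambda>x. ennreal (gd x))"
  unfolding std_gauss_def gd_def ..

lemma sets_std_gauss[simp, measurable_cong]: "sets std_gauss = sets borel"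
  by (simp add: std_gauss_def)

lemma space_std_gauss[simp]: "space std_gauss = UNIV"
  by (simp add: std_gauss_def)

lemma gd_prod:
  fixes p :: "'a::euclidean_space \<Rightarrow> real"
  shows "gd (\<Sum>b\<in>Basis. p b *\<^sub>R b :: 'a) = (\<Prod>b\<in>(Basis::'a set). std_normal_density (p b))"
proof -
  let ?x = "(\<Sum>b\<in>Basis. p b *\<^sub>R b :: 'a)"
  have ib: "?x \<bullet> b = p b" if "b \<in> Basis" for b
    using that by (simp add: inner_sum_left inner_Basis if_distrib cong: if_cong)
  have "(norm ?x)\<^sup>2 = ?x \<bullet> ?x" by (simp add: power2_norm_eq_inner)
  also have "\<dots> = (\<Sum>b\<in>Basis. (?x \<bullet> b) * (?x \<bullet> b))" by (rule euclidean_inner)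
  also have "\<dots> = (\<Sum>b\<in>Basis. (?x \<bullet> b)\<^sup>2)" by (simp add: power2_eq_square)
  also have "\<dots> = (\<Sum>b\<in>(Basis::'a set). (p b)\<^sup>2)" using ib by simp
  finally have n: "(norm ?x)\<^sup>2 = (\<Sum>b\<in>(Basis::'a set). (p b)\<^sup>2)" .
  have c: "(2 * pi) powr (- real DIM('a) / 2) = (1 / sqrt (2 * pi)) ^ DIM('a)"
  proof -
    have "(2 * pi) powr (- real DIM('a) / 2) = inverse (((2 * pi) powr (1/2)) powr real DIM('a))"
      by (simp add: powr_powr powr_minus[symmetric])
    also have "\<dots> = (1 / sqrt (2 * pi)) ^ DIM('a)"
    proof -
      have "((2 * pi) powr (1/2)) powr real DIM('a) = sqrt (2 * pi) ^ DIM('a)"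
        by (subst powr_half_sqrt) (auto intro: powr_realpow)
      then show ?thesis by (simp add: power_one_over inverse_eq_divide)
    qed
    finally show ?thesis .
  qed
  have e: "exp (- (\<Sum>b\<in>(Basis::'a set). (p b)\<^sup>2) / 2) = (\<Prod>b\<in>(Basis::'a set). exp (- (p b)\<^sup>2 / 2))"
    by (simp add: exp_sum[symmetric] sum_divide_distrib sum_negf)
  show ?thesis
    unfolding gd_def n c e std_normal_density_def prod.distrib by simp
qed

lemma nn_integral_gd: "(\<integral>\<^sup>+x. ennreal (gd (x::'a::euclidean_space)) \<partial>lborel) = 1"
proof -
  interpret product_sigma_finite "\<lambda>_::'a. lborel :: real measure" by standard
  have "(\<integral>\<^sup>+x. ennreal (gd (x::'a)) \<partial>lborel)
      = (\<integral>\<^sup>+p. ennreal (gd (\<Sum>b\<in>Basis. p b *\<^sub>R b :: 'a)) \<partial>(\<Pi>\<^sub>M b\<in>(Basis::'a set). lborel))"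
    by (subst lborel_eq) (simp add: nn_integral_distr)
  also have "\<dots> = (\<integral>\<^sup>+p. (\<Prod>b\<in>(Basis::'a set). ennreal (std_normal_density (p b))) \<partial>(\<Pi>\<^sub>M b\<in>(Basis::'a set). lborel))"
    by (simp add: gd_prod prod_ennreal)
  also have "\<dots> = (\<Prod>b\<in>(Basis::'a set). (\<integral>\<^sup>+t. ennreal (std_normal_density t) \<partial>lborel))"
    by (rule product_nn_integral_prod) auto
  also have "(\<integral>\<^sup>+t. ennreal (std_normal_density t) \<partial>lborel) = 1"
    by (subst nn_integral_eq_integral) (auto simp: std_normal_density_def)
  finally show ?thesis by simp
qed

lemma prob_space_std_gauss: "prob_space (std_gauss :: 'a::euclidean_space measure)"
  by (rule prob_spaceI) (simp add: std_gauss_gd emeasure_density_const nn_integral_gd emeasure_density)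

lemma gd_shift: "gd x * exp (a \<bullet> x - (norm a)\<^sup>2 / 2) = gd (x - a)"
proof -
  have "(norm (x - a))\<^sup>2 = (norm x)\<^sup>2 - 2 * (a \<bullet> x) + (norm a)\<^sup>2"
    by (simp add: power2_norm_eq_inner inner_diff inner_commute algebra_simps)
  then show ?thesis
    by (simp add: gd_def mult.assoc exp_add[symmetric] field_simps)
qed

lemma nn_integral_gauss_shift:
  fixes a :: "'a::euclidean_space" and f :: "'a \<Rightarrow> ennreal"
  assumes f[measurable]: "f \<in> borel_measurable borel"
  shows "(\<integral>\<^sup>+x. f x * ennreal (exp (a \<bullet> x - (norm a)\<^sup>2 / 2)) \<partial>std_gauss) = (\<integral>\<^sup>+x. f (x + a) \<partial>std_gauss)"
proof -
  have "(\<integral>\<^sup>+x. f x * ennreal (exp (a \<bullet> x - (norm a)\<^sup>2 / 2)) \<partial>std_gauss)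
      = (\<integral>\<^sup>+x. f x * ennreal (gd (x - a)) \<partial>lborel)"
    unfolding std_gauss_gd
    by (subst nn_integral_density) (auto intro!: nn_integral_cong simp: gd_shift[symmetric] ennreal_mult'' gd_pos less_imp_le mult_ac)
  also have "\<dots> = (\<integral>\<^sup>+x. f x * ennreal (gd (x - a)) \<partial>distr lborel borel ((+) a))"
    by (simp add: lborel_distr_plus)
  also have "\<dots> = (\<integral>\<^sup>+y. f (a + y) * ennreal (gd y) \<partial>lborel)"
    by (subst nn_integral_distr) auto
  also have "\<dots> = (\<integral>\<^sup>+x. f (x + a) \<partial>std_gauss)"
    unfolding std_gauss_gd
    by (subst nn_integral_density) (auto intro!: nn_integral_cong simp: mult_ac add_ac)
  finally show ?thesis .
qed

lemma lborel_distr_uminus_eucl: "distr lborel borel uminus = (lborel :: 'a::euclidean_space measure)"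
  by (subst lborel_affine[of "-1" 0]) (auto simp: density_1 one_ennreal_def[symmetric])

lemma gd_uminus: "gd (- x) = gd x" by (simp add: gd_def)

lemma nn_integral_gauss_uminus:
  fixes f :: "'a::euclidean_space \<Rightarrow> ennreal"
  assumes f[measurable]: "f \<in> borel_measurable borel"
  shows "(\<integral>\<^sup>+x. f (- x) \<partial>std_gauss) = (\<integral>\<^sup>+x. f x \<partial>std_gauss)"
proof -
  have "(\<integral>\<^sup>+x. f x \<partial>std_gauss) = (\<integral>\<^sup>+x. ennreal (gd x) * f x \<partial>distr lborel borel uminus)"
    unfolding std_gauss_gd by (simp add: nn_integral_density lborel_distr_uminus_eucl)
  also have "\<dots> = (\<integral>\<^sup>+x. ennreal (gd (- x)) * f (- x) \<partial>lborel)"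
    by (subst nn_integral_distr) auto
  also have "\<dots> = (\<integral>\<^sup>+x. f (- x) \<partial>std_gauss)"
    unfolding std_gauss_gd by (simp add: nn_integral_density gd_uminus)
  finally show ?thesis ..
qed

lemma distr_std_gauss_uminus: "distr std_gauss borel uminus = (std_gauss :: 'a::euclidean_space measure)"
proof (rule measure_eqI)
  fix A assume A: "A \<in> sets (distr std_gauss borel (uminus :: 'a \<Rightarrow> 'a))"
  then have [measurable]: "A \<in> sets borel" by simp
  have "emeasure (distr std_gauss borel (uminus :: 'a \<Rightarrow> 'a)) A = (\<integral>\<^sup>+x. indicator A (- x) \<partial>std_gauss)"
  proof -
    have m: "(uminus :: 'a \<Rightarrow> 'a) \<in> borel_measurable borel" by measurable
    have s: "(uminus -` A :: 'a set) \<in> sets std_gauss" using measurable_sets[OF m, of A] by simp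
    show ?thesis
      by (subst emeasure_distr) (auto simp: nn_integral_indicator[symmetric, OF s] intro!: nn_integral_cong split: split_indicator)
  qed
  also have "\<dots> = emeasure std_gauss A"
    by (subst nn_integral_gauss_uminus) auto
  finally show "emeasure (distr std_gauss borel (uminus :: 'a \<Rightarrow> 'a)) A = emeasure std_gauss A" .
qed simp

lemma nn_integral_gauss_exp: "(\<integral>\<^sup>+x. ennreal (exp (a \<bullet> x)) \<partial>std_gauss) = ennreal (exp ((norm (a::'a::euclidean_space))\<^sup>2 / 2))"
proof -
  interpret prob_space "std_gauss :: 'a measure" by (rule prob_space_std_gauss)
  have "(\<integral>\<^sup>+x. ennreal (exp (a \<bullet> x)) \<partial>std_gauss)
      = (\<integral>\<^sup>+x. ennreal (exp ((norm a)\<^sup>2 / 2)) * ennreal (exp (a \<bullet> x - (norm a)\<^sup>2 / 2)) \<partial>std_gauss)"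
    by (auto intro!: nn_integral_cong simp: ennreal_mult''[symmetric] exp_add[symmetric])
  also have "\<dots> = ennreal (exp ((norm a)\<^sup>2 / 2)) * (\<integral>\<^sup>+x. 1 * ennreal (exp (a \<bullet> x - (norm a)\<^sup>2 / 2)) \<partial>std_gauss)"
    by (subst nn_integral_cmult) auto
  also have "(\<integral>\<^sup>+x. 1 * ennreal (exp (a \<bullet> x - (norm a)\<^sup>2 / 2)) \<partial>std_gauss) = 1"
    by (subst nn_integral_gauss_shift) (auto simp: prob_space.emeasure_space_1[OF prob_space_std_gauss, simplified])
  finally show ?thesis by simp
qed

lemma integrable_gauss_exp: "integrable std_gauss (\<lambda>x. exp (a \<bullet> (x::'a::euclidean_space)))"
  by (rule integrableI_nonneg) (auto simp: nn_integral_gauss_exp)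

lemma integrable_gauss_norm: "integrable std_gauss (\<lambda>x. norm (x::'a::euclidean_space))"
proof (rule Bochner_Integration.integrable_bound)
  show "integrable std_gauss (\<lambda>x. \<Sum>b\<in>(Basis::'a set). exp (b \<bullet> x) + exp ((- b) \<bullet> x))"
    by (intro Bochner_Integration.integrable_sum Bochner_Integration.integrable_add integrable_gauss_exp)
  have "norm x \<le> (\<Sum>b\<in>(Basis::'a set). exp (b \<bullet> x) + exp ((- b) \<bullet> x))" for x :: 'a
  proof -
    have "norm x \<le> (\<Sum>b\<in>(Basis::'a set). \<bar>x \<bullet> b\<bar>)" by (rule norm_le_l1)
    also have "\<dots> \<le> (\<Sum>b\<in>(Basis::'a set). exp (b \<bullet> x) + exp ((- b) \<bullet> x))"
    proof (rule sum_mono)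
      fix b :: 'a
      have "\<bar>t\<bar> \<le> exp t + exp (- t)" for t :: real
        using exp_ge_add_one_self[of t] exp_ge_add_one_self[of "-t"] exp_gt_zero[of t] exp_gt_zero[of "-t"] by linarith
      then show "\<bar>x \<bullet> b\<bar> \<le> exp (b \<bullet> x) + exp ((- b) \<bullet> x)" by (simp add: inner_commute)
    qed
    finally show ?thesis .
  qed
  then show "AE x in std_gauss. norm (norm x) \<le> norm (\<Sum>b\<in>(Basis::'a set). exp (b \<bullet> x) + exp ((- b) \<bullet> x))"
    by (auto intro!: AE_I2 order_trans[OF _ abs_ge_self])
qed auto

lemma integral_gauss_inner: "(\<integral>x. v \<bullet> x \<partial>std_gauss) = (0::real)"
proof -
  have "(\<integral>x. v \<bullet> x \<partial>std_gauss) = (\<integral>x. v \<bullet> x \<partial>distr std_gauss borel uminus)"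
    by (simp add: distr_std_gauss_uminus)
  also have "\<dots> = (\<integral>x. v \<bullet> (- x) \<partial>std_gauss)"
    by (subst integral_distr) auto
  also have "\<dots> = - (\<integral>x. v \<bullet> x \<partial>std_gauss)" by simp
  finally show ?thesis by simp
qed

lemma deriv_seq:
  fixes loss :: "'a::euclidean_space \<Rightarrow> real"
  assumes d: "(loss has_derivative (\<lambda>h. G \<bullet> h)) (at w)"
  shows "(\<lambda>m. real (Suc m) * (loss (w + inverse (real (Suc m)) *\<^sub>R b) - loss w)) \<longlonglongrightarrow> G \<bullet> b"
proof -
  have "((\<lambda>t. w + t *\<^sub>R b) has_derivative (\<lambda>t. t *\<^sub>R b)) (at 0)"
    by (auto intro!: derivative_eq_intros)
  moreover have "(loss has_derivative (\<lambda>h. G \<bullet> h)) (at (w + 0 *\<^sub>R b))" using d by simp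
  ultimately have "((loss \<circ> (\<lambda>t. w + t *\<^sub>R b)) has_derivative ((\<lambda>h. G \<bullet> h) \<circ> (\<lambda>t. t *\<^sub>R b))) (at 0)"
    by (rule diff_chain_at)
  then have "((\<lambda>t. loss (w + t *\<^sub>R b)) has_derivative (\<lambda>t. G \<bullet> (t *\<^sub>R b))) (at 0)"
    by (simp add: o_def)
  then have "((\<lambda>t. loss (w + t *\<^sub>R b)) has_derivative (\<lambda>t. t * (G \<bullet> b))) (at 0)" by simp
  then have "((\<lambda>t. loss (w + t *\<^sub>R b)) has_real_derivative (G \<bullet> b)) (at 0)"
    unfolding has_field_derivative_def
  proof -
    assume h: "((\<lambda>t. loss (w + t *\<^sub>R b)) has_derivative (\<lambda>t. t * (G \<bullet> b))) (at 0)"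
    have e: "(\<lambda>t. t * (G \<bullet> b)) = (*) (G \<bullet> b)" by (rule ext) simp
    show "((\<lambda>t. loss (w + t *\<^sub>R b)) has_derivative (*) (G \<bullet> b)) (at 0)" using h unfolding e .
  qed
  then have lim: "((\<lambda>h. (loss (w + h *\<^sub>R b) - loss w) / h) \<longlongrightarrow> G \<bullet> b) (at 0)"
    using DERIV_D by fastforce
  have X: "(\<lambda>m. inverse (real (Suc m))) \<longlonglongrightarrow> 0" by (rule LIMSEQ_inverse_real_of_nat)
  have "((\<lambda>h. (loss (w + h *\<^sub>R b) - loss w) / h) \<circ> (\<lambda>m. inverse (real (Suc m)))) \<longlonglongrightarrow> G \<bullet> b"
    using lim X unfolding tendsto_at_iff_sequentially by auto
  then show ?thesis by (simp add: o_def divide_inverse mult.commute)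
qed

lemma grad_measurable:
  fixes loss :: "'a::euclidean_space \<Rightarrow> 'z \<Rightarrow> real" and P :: "'m \<Rightarrow> 'a" and Z :: "'m \<Rightarrow> 'z"
  assumes d: "\<And>w z. ((\<lambda>v. loss v z) has_derivative (\<lambda>h. grad w z \<bullet> h)) (at w)"
    and m: "\<And>h. (\<lambda>x. loss (P x + h) (Z x)) \<in> borel_measurable M"
  shows "(\<lambda>x. grad (P x) (Z x)) \<in> borel_measurable M"
proof -
  have comp: "(\<lambda>x. grad (P x) (Z x) \<bullet> b) \<in> borel_measurable M" for b
  proof (rule borel_measurable_LIMSEQ_real)
    show "(\<lambda>m. real (Suc m) * (loss (P x + inverse (real (Suc m)) *\<^sub>R b) (Z x) - loss (P x) (Z x)))
          \<longlonglongrightarrow> grad (P x) (Z x) \<bullet> b" for x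
      by (rule deriv_seq[OF d])
    show "(\<lambda>x. real (Suc m) * (loss (P x + inverse (real (Suc m)) *\<^sub>R b) (Z x) - loss (P x) (Z x)))
          \<in> borel_measurable M" for m
    proof -
      have "(\<lambda>x. loss (P x) (Z x)) \<in> borel_measurable M" using m[of 0] by simp
      then show ?thesis using m[of "inverse (real (Suc m)) *\<^sub>R b"] by measurable
    qed
  qed
  have "(\<lambda>x. \<Sum>b\<in>Basis. (grad (P x) (Z x) \<bullet> b) *\<^sub>R b) \<in> borel_measurable M"
    using comp by measurable
  then show ?thesis by (simp add: euclidean_representation)
qed

lemma loss_lip:
  fixes loss :: "'a::euclidean_space \<Rightarrow> 'z \<Rightarrow> real"
  assumes d: "\<And>w z. ((\<lambda>v. loss v z) has_derivative (\<lambda>h. grad w z \<bullet> h)) (at w)"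
    and L: "\<And>w z. norm (grad w z) \<le> L"
  shows "\<bar>loss w z - loss w' z\<bar> \<le> L * norm (w - w')"
proof -
  have "norm ((\<lambda>v. loss v z) w - (\<lambda>v. loss v z) w') \<le> L * norm (w - w')"
  proof (rule differentiable_bound[where S=UNIV and f'="\<lambda>x h. grad x z \<bullet> h"])
    show "((\<lambda>v. loss v z) has_derivative (\<lambda>h. grad x z \<bullet> h)) (at x within UNIV)" for x
      using d by simp
    show "onorm (\<lambda>h. grad x z \<bullet> h) \<le> L" for x
    proof (rule onorm_bound)
      show "0 \<le> L" using L[of x z] norm_ge_zero[of "grad x z"] by linarith
      show "norm (grad x z \<bullet> h) \<le> L * norm h" for h
        using Cauchy_Schwarz_ineq2[of "grad x z" h] L[of x z]
        by (simp add: mult_right_mono order_trans)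
    qed
  qed auto
  then show ?thesis by simp
qed

lemma traj_cong_xi:
  "(\<And>k. k \<in> {1..t} \<Longrightarrow> xi k = xi' k) \<Longrightarrow>
   sgld_traj w0 eta sg g s u xi t = sgld_traj w0 eta sg g s u xi' t"
  by (induction t) auto

lemma traj_bound:
  fixes g :: "'a::real_normed_vector \<Rightarrow> 'z \<Rightarrow> 'a"
  assumes L: "\<And>w z. norm (g w z) \<le> L"
  shows "norm (sgld_traj w0 eta sg g s u xi t - w0) \<le> (\<Sum>k=1..t. \<bar>eta k\<bar> * L + \<bar>sg k\<bar> * norm (xi k))"
proof (induction t)
  case 0 then show ?case by simp
next
  case (Suc t)
  let ?W = "sgld_traj w0 eta sg g s u xi t"
  have "norm (sgld_traj w0 eta sg g s u xi (Suc t) - w0)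
      = norm ((?W - w0) - eta (Suc t) *\<^sub>R g ?W (s (u (Suc t))) + sg (Suc t) *\<^sub>R xi (Suc t))"
    by (simp add: algebra_simps)
  also have "\<dots> \<le> norm (?W - w0) + \<bar>eta (Suc t)\<bar> * L + \<bar>sg (Suc t)\<bar> * norm (xi (Suc t))"
  proof -
    have "norm (eta (Suc t) *\<^sub>R g ?W (s (u (Suc t)))) \<le> \<bar>eta (Suc t)\<bar> * L"
      using L by (simp add: mult_left_mono)
    then show ?thesis by (smt (verit) norm_scaleR norm_triangle_ineq norm_triangle_ineq4)
  qed
  also have "\<dots> \<le> (\<Sum>k=1..Suc t. \<bar>eta k\<bar> * L + \<bar>sg k\<bar> * norm (xi k))"
    using Suc by (simp add: sum.atLeast1_atMost_eq)
  finally show ?case .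
qed

lemma traj_measurable:
  fixes g :: "'a::euclidean_space \<Rightarrow> 'z \<Rightarrow> 'a"
  assumes X: "\<And>k. k \<in> {1..t} \<Longrightarrow> (\<lambda>m. X m k) \<in> borel_measurable M"
    and G: "\<And>W k. W \<in> borel_measurable M \<Longrightarrow> k \<in> {1..t} \<Longrightarrow> (\<lambda>m. g (W m) (S m (u k))) \<in> borel_measurable M"
  shows "(\<lambda>m. sgld_traj w0 eta sg g (S m) u (X m) t) \<in> borel_measurable M"
  using X G
proof (induction t)
  case 0 then show ?case by simp
next
  case (Suc t)
  have IH: "(\<lambda>m. sgld_traj w0 eta sg g (S m) u (X m) t) \<in> borel_measurable M"
    using Suc by auto
  have "(\<lambda>m. g (sgld_traj w0 eta sg g (S m) u (X m) t) (S m (u (Suc t)))) \<in> borel_measurable M"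
    using Suc.prems(2)[OF IH] by auto
  moreover have "(\<lambda>m. X m (Suc t)) \<in> borel_measurable M" using Suc.prems(1) by auto
  ultimately show ?case using IH by simp
qed

definition gA :: "'a::euclidean_space \<Rightarrow> (nat \<Rightarrow> real) \<Rightarrow> (nat \<Rightarrow> real) \<Rightarrow> ('a \<Rightarrow> 'z \<Rightarrow> 'a)
    \<Rightarrow> (nat \<Rightarrow> 'z) \<Rightarrow> (nat \<Rightarrow> nat) \<Rightarrow> nat set \<Rightarrow> nat \<Rightarrow> (nat \<Rightarrow> 'a) \<Rightarrow> 'a" where
  "gA w0 eta sg g s u D k xi = (if k \<in> D then eta k / sg k else 0) *\<^sub>R g (sgld_traj w0 eta sg g s u xi (k - 1)) (s (u k))"

definition etaD :: "nat set \<Rightarrow> (nat \<Rightarrow> real) \<Rightarrow> nat \<Rightarrow> real" where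
  "etaD D eta k = (if k \<in> D then 0 else eta k)"

definition gS :: "'a::euclidean_space \<Rightarrow> (nat \<Rightarrow> real) \<Rightarrow> (nat \<Rightarrow> real) \<Rightarrow> ('a \<Rightarrow> 'z \<Rightarrow> 'a)
    \<Rightarrow> (nat \<Rightarrow> 'z) \<Rightarrow> (nat \<Rightarrow> nat) \<Rightarrow> nat set \<Rightarrow> nat \<Rightarrow> (nat \<Rightarrow> 'a) \<Rightarrow> real" where
  "gS w0 eta sg g s u D T xi = (\<Sum>k=1..T. gA w0 eta sg g s u D k xi \<bullet> xi k - (norm (gA w0 eta sg g s u D k xi))\<^sup>2 / 2)"

lemma gA_cong_xi: "(\<And>j. j \<in> {1..<k} \<Longrightarrow> xi j = xi' j) \<Longrightarrow> gA w0 eta sg g s u D k xi = gA w0 eta sg g s u D k xi'"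
  unfolding gA_def by (subst traj_cong_xi[of "k - 1" xi xi']) auto

lemma gS_cong_xi: "(\<And>j. j \<in> {1..T} \<Longrightarrow> xi j = xi' j) \<Longrightarrow> gS w0 eta sg g s u D T xi = gS w0 eta sg g s u D T xi'"
  unfolding gS_def
proof (intro sum.cong refl)
  fix k assume k: "k \<in> {1..T}" and h: "\<And>j. j \<in> {1..T} \<Longrightarrow> xi j = xi' j"
  have "gA w0 eta sg g s u D k xi = gA w0 eta sg g s u D k xi'" using k h by (intro gA_cong_xi) auto
  then show "gA w0 eta sg g s u D k xi \<bullet> xi k - (norm (gA w0 eta sg g s u D k xi))\<^sup>2 / 2 =
             gA w0 eta sg g s u D k xi' \<bullet> xi' k - (norm (gA w0 eta sg g s u D k xi'))\<^sup>2 / 2"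
    using k h by simp
qed

lemma gS_Suc: "gS w0 eta sg g s u D (Suc T) xi = gS w0 eta sg g s u D T xi +
   (gA w0 eta sg g s u D (Suc T) xi \<bullet> xi (Suc T) - (norm (gA w0 eta sg g s u D (Suc T) xi))\<^sup>2 / 2)"
  unfolding gS_def by (simp add: sum.atLeast1_atMost_eq)

context
  fixes w0 :: "'a::euclidean_space" and eta sg :: "nat \<Rightarrow> real" and g :: "'a \<Rightarrow> 'z \<Rightarrow> 'a"
    and s :: "nat \<Rightarrow> 'z" and u :: "nat \<Rightarrow> nat" and D :: "nat set"
  assumes gm: "\<And>z. (\<lambda>w. g w z) \<in> borel_measurable borel"
    and sgD: "\<And>k. k \<in> D \<Longrightarrow> sg k \<noteq> 0"
begin

lemma traj_meas_G:
  assumes "t \<le> T"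
  shows "(\<lambda>xi. sgld_traj w0 eta' sg g s u xi t) \<in> borel_measurable (PiM {1..T} (\<lambda>_. std_gauss :: 'a measure))"
proof (rule traj_measurable[where X="\<lambda>x. x" and S="\<lambda>_. s"])
  show "(\<lambda>m. m k) \<in> borel_measurable (PiM {1..T} (\<lambda>_. std_gauss :: 'a measure))" if "k \<in> {1..t}" for k
    using that assms by (intro measurable_PiM_component_rev) auto
  show "(\<lambda>m. g (W m) (s (u k))) \<in> borel_measurable (PiM {1..T} (\<lambda>_. std_gauss :: 'a measure))"
    if "W \<in> borel_measurable (PiM {1..T} (\<lambda>_. std_gauss :: 'a measure))" for W k
    using measurable_compose[OF that gm] by simp
qed

lemma gA_meas:
  assumes "k \<le> T"
  shows "(\<lambda>xi. gA w0 eta sg g s u D k xi) \<in> borel_measurable (PiM {1..T} (\<lambda>_. std_gauss :: 'a measure))"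
  unfolding gA_def
  using measurable_compose[OF traj_meas_G[of "k - 1" T eta] gm] assms by simp

lemma gS_meas:
  assumes "T \<le> T'"
  shows "(\<lambda>xi. gS w0 eta sg g s u D T xi) \<in> borel_measurable (PiM {1..T'} (\<lambda>_. std_gauss :: 'a measure))"
proof -
  have "(\<lambda>xi. gA w0 eta sg g s u D k xi \<bullet> xi k - (norm (gA w0 eta sg g s u D k xi))\<^sup>2 / 2)
        \<in> borel_measurable (PiM {1..T'} (\<lambda>_. std_gauss :: 'a measure))" if "k \<in> {1..T}" for k
  proof -
    have c[measurable]: "(\<lambda>xi. xi k) \<in> borel_measurable (PiM {1..T'} (\<lambda>_. std_gauss :: 'a measure))"
      using that assms by (intro measurable_PiM_component_rev) auto
    have a[measurable]: "(\<lambda>xi. gA w0 eta sg g s u D k xi) \<in> borel_measurable (PiM {1..T'} (\<lambda>_. std_gauss :: 'a measure))"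
      using gA_meas[of k T'] that assms by simp
    show ?thesis by measurable
  qed
  then show ?thesis unfolding gS_def by (intro borel_measurable_sum) auto
qed

lemma girsanov:
  fixes F :: "'a \<Rightarrow> ennreal"
  assumes F[measurable]: "F \<in> borel_measurable borel"
  shows "(\<integral>\<^sup>+xi. F (sgld_traj w0 eta sg g s u xi T) * ennreal (exp (gS w0 eta sg g s u D T xi))
           \<partial>PiM {1..T} (\<lambda>_. std_gauss))
       = (\<integral>\<^sup>+xi. F (sgld_traj w0 (etaD D eta) sg g s u xi T) \<partial>PiM {1..T} (\<lambda>_. std_gauss))"
  using F
proof (induction T arbitrary: F)
  case 0
  then show ?case by (simp add: gS_def PiM_empty)
next
  case (Suc T)
  interpret product_sigma_finite "\<lambda>_::nat. std_gauss :: 'a measure"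
    unfolding product_sigma_finite_def using prob_space_std_gauss prob_space_imp_sigma_finite by blast
  interpret N: prob_space "std_gauss :: 'a measure" by (rule prob_space_std_gauss)
  have Fm[measurable]: "F \<in> borel_measurable borel" by fact
  define z where "z = s (u (Suc T))"
  define H where "H w = (\<integral>\<^sup>+y. F (w - etaD D eta (Suc T) *\<^sub>R g w z + sg (Suc T) *\<^sub>R y) \<partial>std_gauss)" for w
  have gz[measurable]: "(\<lambda>w. g w z) \<in> borel_measurable borel" by (rule gm)
  have Hm[measurable]: "H \<in> borel_measurable borel"
    unfolding H_def by measurable
  have I: "{1..Suc T} = insert (Suc T) {1..T}" by auto
  have W: "sgld_traj w0 et sg g s u (xi(Suc T := y)) T = sgld_traj w0 et sg g s u xi T" for et xi y
    by (rule traj_cong_xi) auto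
  have "(\<integral>\<^sup>+xi. F (sgld_traj w0 eta sg g s u xi (Suc T)) * ennreal (exp (gS w0 eta sg g s u D (Suc T) xi))
           \<partial>PiM {1..Suc T} (\<lambda>_. std_gauss))
      = (\<integral>\<^sup>+xi. (\<integral>\<^sup>+y. F (sgld_traj w0 eta sg g s u (xi(Suc T := y)) (Suc T))
             * ennreal (exp (gS w0 eta sg g s u D (Suc T) (xi(Suc T := y)))) \<partial>std_gauss) \<partial>PiM {1..T} (\<lambda>_. std_gauss))"
    unfolding I
  proof (rule product_nn_integral_insert)
    show "(\<lambda>xi. F (sgld_traj w0 eta sg g s u xi (Suc T)) * ennreal (exp (gS w0 eta sg g s u D (Suc T) xi)))
       \<in> borel_measurable (PiM (insert (Suc T) {1..T}) (\<lambda>_. std_gauss))"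
      using traj_meas_G[of "Suc T" "Suc T" eta] gS_meas[of "Suc T" "Suc T"] unfolding I by measurable
  qed auto
  also have "\<dots> = (\<integral>\<^sup>+xi. ennreal (exp (gS w0 eta sg g s u D T xi)) * H (sgld_traj w0 eta sg g s u xi T)
       \<partial>PiM {1..T} (\<lambda>_. std_gauss))"
  proof (rule nn_integral_cong)
    fix xi assume xi: "xi \<in> space (PiM {1..T} (\<lambda>_. std_gauss :: 'a measure))"
    define w where "w = sgld_traj w0 eta sg g s u xi T"
    define a where "a = gA w0 eta sg g s u D (Suc T) xi"
    have a': "gA w0 eta sg g s u D (Suc T) (xi(Suc T := y)) = a" for y
      unfolding a_def by (rule gA_cong_xi) auto
    have S': "gS w0 eta sg g s u D T (xi(Suc T := y)) = gS w0 eta sg g s u D T xi" for y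
      by (rule gS_cong_xi) auto
    have "(\<integral>\<^sup>+y. F (sgld_traj w0 eta sg g s u (xi(Suc T := y)) (Suc T))
             * ennreal (exp (gS w0 eta sg g s u D (Suc T) (xi(Suc T := y)))) \<partial>std_gauss)
        = (\<integral>\<^sup>+y. ennreal (exp (gS w0 eta sg g s u D T xi)) * (F (w - eta (Suc T) *\<^sub>R g w z + sg (Suc T) *\<^sub>R y)
             * ennreal (exp (a \<bullet> y - (norm a)\<^sup>2 / 2))) \<partial>std_gauss)"
      by (intro nn_integral_cong)
         (simp add: gS_Suc W a' S' w_def z_def exp_add ennreal_mult'' mult_ac)
    also have "\<dots> = ennreal (exp (gS w0 eta sg g s u D T xi)) * (\<integral>\<^sup>+y. F (w - eta (Suc T) *\<^sub>R g w z + sg (Suc T) *\<^sub>R y)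
             * ennreal (exp (a \<bullet> y - (norm a)\<^sup>2 / 2)) \<partial>std_gauss)"
      by (rule nn_integral_cmult) measurable
    also have "(\<integral>\<^sup>+y. F (w - eta (Suc T) *\<^sub>R g w z + sg (Suc T) *\<^sub>R y)
             * ennreal (exp (a \<bullet> y - (norm a)\<^sup>2 / 2)) \<partial>std_gauss)
        = (\<integral>\<^sup>+y. F (w - eta (Suc T) *\<^sub>R g w z + sg (Suc T) *\<^sub>R (y + a)) \<partial>std_gauss)"
      by (rule nn_integral_gauss_shift) measurable
    also have "\<dots> = H w"
      unfolding H_def
    proof (rule nn_integral_cong)
      fix y
      show "F (w - eta (Suc T) *\<^sub>R g w z + sg (Suc T) *\<^sub>R (y + a)) =
            F (w - etaD D eta (Suc T) *\<^sub>R g w z + sg (Suc T) *\<^sub>R y)"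
      proof (cases "Suc T \<in> D")
        case True
        then have "sg (Suc T) *\<^sub>R a = eta (Suc T) *\<^sub>R g w z"
          using sgD[OF True] unfolding a_def gA_def w_def z_def by simp
        then show ?thesis using True by (simp add: etaD_def scaleR_add_right algebra_simps)
      next
        case False
        then show ?thesis by (simp add: a_def gA_def etaD_def)
      qed
    qed
    finally show "(\<integral>\<^sup>+y. F (sgld_traj w0 eta sg g s u (xi(Suc T := y)) (Suc T))
             * ennreal (exp (gS w0 eta sg g s u D (Suc T) (xi(Suc T := y)))) \<partial>std_gauss)
        = ennreal (exp (gS w0 eta sg g s u D T xi)) * H (sgld_traj w0 eta sg g s u xi T)"
      by (simp add: w_def fun_upd_def)
  qed
  also have "\<dots> = (\<integral>\<^sup>+xi. H (sgld_traj w0 eta sg g s u xi T) * ennreal (exp (gS w0 eta sg g s u D T xi))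
       \<partial>PiM {1..T} (\<lambda>_. std_gauss))"
    by (simp add: mult.commute)
  also have "\<dots> = (\<integral>\<^sup>+xi. H (sgld_traj w0 (etaD D eta) sg g s u xi T) \<partial>PiM {1..T} (\<lambda>_. std_gauss))"
    by (rule Suc.IH) (rule Hm)
  also have "\<dots> = (\<integral>\<^sup>+xi. (\<integral>\<^sup>+y. F (sgld_traj w0 (etaD D eta) sg g s u (xi(Suc T := y)) (Suc T)) \<partial>std_gauss)
       \<partial>PiM {1..T} (\<lambda>_. std_gauss))"
    by (intro nn_integral_cong) (simp add: H_def W z_def)
  also have "\<dots> = (\<integral>\<^sup>+xi. F (sgld_traj w0 (etaD D eta) sg g s u xi (Suc T)) \<partial>PiM {1..Suc T} (\<lambda>_. std_gauss))"
    unfolding I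
  proof (rule product_nn_integral_insert[symmetric])
    show "(\<lambda>xi. F (sgld_traj w0 (etaD D eta) sg g s u xi (Suc T)))
       \<in> borel_measurable (PiM (insert (Suc T) {1..T}) (\<lambda>_. std_gauss))"
      using traj_meas_G[of "Suc T" "Suc T" "etaD D eta"] unfolding I by measurable
  qed auto
  finally show ?case .
qed

end

lemma integrable_pair_snd:
  assumes "prob_space M1" "sigma_finite_measure M2" "integrable M2 f"
  shows "integrable (M1 \<Otimes>\<^sub>M M2) (\<lambda>x. f (snd x) :: real)"
proof -
  interpret M1: prob_space M1 by fact
  interpret M2: sigma_finite_measure M2 by fact
  interpret pair_sigma_finite M1 M2 ..
  have fm[measurable]: "f \<in> borel_measurable M2" using assms(3) by auto
  have "(\<integral>\<^sup>+x. ennreal (norm (f (snd x))) \<partial>(M1 \<Otimes>\<^sub>M M2)) = (\<integral>\<^sup>+a. (\<integral>\<^sup>+b. ennreal (norm (f b)) \<partial>M2) \<partial>M1)"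
    by (subst M2.nn_integral_fst[symmetric]) auto
  also have "\<dots> = (\<integral>\<^sup>+b. ennreal (norm (f b)) \<partial>M2)" by (simp add: M1.emeasure_space_1)
  also have "\<dots> < \<infinity>" using assms(3) by (simp add: integrable_iff_bounded)
  finally show ?thesis by (intro integrableI_bounded) auto
qed

lemma integrable_pair_fst:
  assumes "sigma_finite_measure M1" "prob_space M2" "integrable M1 f"
  shows "integrable (M1 \<Otimes>\<^sub>M M2) (\<lambda>x. f (fst x) :: real)"
proof -
  interpret M1: sigma_finite_measure M1 by fact
  interpret M2: prob_space M2 by fact
  interpret pair_sigma_finite M1 M2 ..
  have fm[measurable]: "f \<in> borel_measurable M1" using assms(3) by auto
  have "(\<integral>\<^sup>+x. ennreal (norm (f (fst x))) \<partial>(M1 \<Otimes>\<^sub>M M2)) = (\<integral>\<^sup>+a. (\<integral>\<^sup>+b. ennreal (norm (f a)) \<partial>M2) \<partial>M1)"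
    by (subst M2.nn_integral_fst[symmetric]) auto
  also have "\<dots> = (\<integral>\<^sup>+a. ennreal (norm (f a)) \<partial>M1)" by (simp add: M2.emeasure_space_1)
  also have "\<dots> < \<infinity>" using assms(3) by (simp add: integrable_iff_bounded)
  finally show ?thesis by (intro integrableI_bounded) auto
qed

lemma integrable_PiM_comp:
  assumes "\<And>j. j \<in> I \<Longrightarrow> prob_space (M j)" "k \<in> I" "integrable (M k) f"
  shows "integrable (PiM I M) (\<lambda>x. f (x k) :: real)"
proof -
  have "distr (PiM I M) (M k) (\<lambda>x. x k) = M k" by (rule distr_PiM_component) (use assms in auto)
  moreover have "(\<lambda>x. x k) \<in> measurable (PiM I M) (M k)" by (rule measurable_component_singleton) (rule assms(2))
  ultimately show ?thesis using assms(3) integrable_distr[of "\<lambda>x. x k" "PiM I M" "M k" f] by simp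
qed

lemma jensen_exp:
  assumes "prob_space M" "integrable M Y" "(\<integral>\<^sup>+x. ennreal (exp (Y x)) \<partial>M) \<le> ennreal B" "B > 0"
  shows "(\<integral>x. Y x \<partial>M) \<le> ln B"
proof -
  interpret prob_space M by fact
  have Ym[measurable]: "Y \<in> borel_measurable M" using assms(2) by auto
  define m where "m = (\<integral>x. Y x \<partial>M)"
  have ie: "integrable M (\<lambda>x. exp (Y x))"
    using assms(3) by (intro integrableI_nonneg) (auto simp: top_unique less_top[symmetric] intro: le_less_trans)
  have "exp m = (\<integral>x. exp m * (1 + Y x - m) \<partial>M)"
    using assms(2) by (simp add: m_def prob_space)
  also have "\<dots> \<le> (\<integral>x. exp (Y x) \<partial>M)"
  proof (rule integral_mono)
    show "integrable M (\<lambda>x. exp m * (1 + Y x - m))" using assms(2) by auto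
    show "exp m * (1 + Y x - m) \<le> exp (Y x)" for x
    proof -
      have "exp (Y x - m) \<ge> 1 + (Y x - m)" by (rule exp_ge_add_one_self)
      then have "exp m * exp (Y x - m) \<ge> exp m * (1 + Y x - m)"
        by (intro mult_left_mono) (auto simp: algebra_simps)
      then show ?thesis by (simp add: exp_diff)
    qed
  qed (rule ie)
  also have "(\<integral>x. exp (Y x) \<partial>M) \<le> B"
  proof -
    have "ennreal (\<integral>x. exp (Y x) \<partial>M) = (\<integral>\<^sup>+x. ennreal (exp (Y x)) \<partial>M)"
      using ie by (subst nn_integral_eq_integral) auto
    also have "\<dots> \<le> ennreal B" by fact
    finally show ?thesis
      using ennreal_le_iff[of B] assms(4) by simp
  qed
  finally have "exp m \<le> B" .
  then show ?thesis unfolding m_def[symmetric] using assms(4) by (metis ln_exp ln_le_cancel_iff exp_gt_zero)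
qed

lemma sq_opt:
  fixes Dv a b :: real
  assumes "a \<ge> 0" "b \<ge> 0" "\<And>l. l * Dv \<le> l\<^sup>2 * a + b"
  shows "\<bar>Dv\<bar> \<le> 2 * sqrt (a * b)"
proof -
  have key: "\<bar>Dv\<bar> \<le> t * a + b / t" if t: "t > 0" for t
  proof -
    have "(t * sgn Dv) * Dv \<le> (t * sgn Dv)\<^sup>2 * a + b" by (rule assms(3))
    moreover have "(t * sgn Dv) * Dv = t * \<bar>Dv\<bar>" by (simp add: sgn_mult_abs mult.assoc abs_sgn[symmetric] mult.commute[of "sgn Dv"])
    moreover have "(t * sgn Dv)\<^sup>2 \<le> t\<^sup>2" by (auto simp: power_mult_distrib sgn_if)
    moreover have "(t * sgn Dv)\<^sup>2 * a \<le> t\<^sup>2 * a" using assms(1) calculation(3) by (rule mult_right_mono[rotated])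
    ultimately have "t * \<bar>Dv\<bar> \<le> t\<^sup>2 * a + b" by linarith
    then show ?thesis using t by (simp add: field_simps power2_eq_square)
  qed
  show ?thesis
  proof (cases "a > 0 \<and> b > 0")
    case True
    have "\<bar>Dv\<bar> \<le> (sqrt b / sqrt a) * a + b / (sqrt b / sqrt a)" using True by (intro key) auto
    also have "\<dots> = 2 * sqrt (a * b)"
    proof -
      have sa: "sqrt a * sqrt a = a" and sb: "sqrt b * sqrt b = b" using True by auto
      have "sqrt a > 0" "sqrt b > 0" using True by auto
      then show ?thesis using sa sb by (simp add: real_sqrt_mult field_simps)
    qed
    finally show ?thesis .
  next
    case False
    have "\<bar>Dv\<bar> \<le> e" if e: "e > 0" for e
    proof (cases "a = 0")
      case True
      have "\<bar>Dv\<bar> \<le> (b + 1) / e * a + b / ((b + 1) / e)" using e assms by (intro key) (auto intro: add_nonneg_pos)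
      also have "\<dots> = b * e / (b + 1)" using True e assms by (simp add: field_simps)
      also have "\<dots> \<le> e" using e assms by (simp add: field_simps)
      finally show ?thesis .
    next
      case False
      then have "b = 0" using \<open>\<not> (a > 0 \<and> b > 0)\<close> assms by auto
      have "\<bar>Dv\<bar> \<le> e / (a + 1) * a + b / (e / (a + 1))" using e assms by (intro key) auto
      also have "\<dots> = e * a / (a + 1)" using \<open>b = 0\<close> by simp
      also have "\<dots> \<le> e" using e assms by (simp add: field_simps)
      finally show ?thesis .
    qed
    then have "\<bar>Dv\<bar> \<le> 0" by (meson dense not_le)
    then show ?thesis using assms(1,2) by simp
  qed
qed

context
  fixes \<mu> :: "'z measure" and loss :: "'a::euclidean_space \<Rightarrow> 'z \<Rightarrow> real" and grad :: "'a \<Rightarrow> 'z \<Rightarrow> 'a"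
    and R L :: real
  assumes mu: "prob_space \<mu>"
    and lossm: "(\<lambda>(w, z). loss w z) \<in> borel_measurable (borel \<Otimes>\<^sub>M \<mu>)"
    and dlo: "\<And>w z. ((\<lambda>v. loss v z) has_derivative (\<lambda>h. grad w z \<bullet> h)) (at w)"
    and R0: "R \<ge> 0"
    and subg: "\<And>w. subgaussian \<mu> (loss w) R"
    and gL: "\<And>w z. norm (grad w z) \<le> L"
begin

lemma half_le: "0 \<le> x \<Longrightarrow> x \<le> B \<Longrightarrow> norm (x / 2 :: real) \<le> B" by simp

lemma L0: "L \<ge> 0" using gL[of undefined undefined] norm_ge_zero by (rule order_trans[rotated])

lemma lip: "\<bar>loss w z - loss w' z\<bar> \<le> L * norm (w - w')"
  by (rule loss_lip[OF dlo gL])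

lemma loss_cont: "continuous_on UNIV (\<lambda>w. loss w z)"
  by (rule lipschitz_on_continuous_on[where L=L], rule lipschitz_onI) (use lip L0 in \<open>auto simp: dist_norm\<close>)

lemma loss_meas_w[measurable]: "(\<lambda>w. loss w z) \<in> borel_measurable borel"
  by (rule borel_measurable_continuous_onI[OF loss_cont])

lemma grad_meas_w[measurable]: "(\<lambda>w. grad w z) \<in> borel_measurable borel"
proof -
  have "(\<lambda>x. grad (id x) ((\<lambda>_. z) x)) \<in> borel_measurable borel"
  proof (rule grad_measurable[OF dlo])
    fix h :: 'a
    have "continuous_on UNIV (\<lambda>x. loss (x + h) z)"
    proof -
      have "continuous_on UNIV (\<lambda>x::'a. x + h)" by (intro continuous_intros)
      from continuous_on_compose[OF this continuous_on_subset[OF loss_cont[of z]]]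
      show ?thesis by (simp add: o_def)
    qed
    then show "(\<lambda>x. loss (id x + h) ((\<lambda>_. z) x)) \<in> borel_measurable borel"
      by (simp add: borel_measurable_continuous_onI)
  qed
  then show ?thesis by simp
qed

lemma grad_joint[measurable]: "(\<lambda>p. grad (fst p) (snd p)) \<in> borel_measurable (borel \<Otimes>\<^sub>M \<mu>)"
proof (rule grad_measurable[OF dlo])
  fix h :: 'a
  have "(\<lambda>p::'a \<times> 'z. (fst p + h, snd p)) \<in> measurable (borel \<Otimes>\<^sub>M \<mu>) (borel \<Otimes>\<^sub>M \<mu>)"
    by measurable
  from measurable_compose[OF this lossm]
  show "(\<lambda>x. loss (fst x + h) (snd x)) \<in> borel_measurable (borel \<Otimes>\<^sub>M \<mu>)" by (simp add: case_prod_beta)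
qed

lemma loss_int: "integrable \<mu> (loss w)"
  using subg[of w] unfolding subgaussian_def by auto

lemma pop_lip: "\<bar>pop_risk \<mu> loss w - pop_risk \<mu> loss w'\<bar> \<le> L * norm (w - w')"
proof -
  interpret prob_space \<mu> by (rule mu)
  have "\<bar>pop_risk \<mu> loss w - pop_risk \<mu> loss w'\<bar> = \<bar>\<integral>z. loss w z - loss w' z \<partial>\<mu>\<bar>"
    unfolding pop_risk_def using loss_int[of w] loss_int[of w'] by simp
  also have "\<dots> \<le> (\<integral>z. \<bar>loss w z - loss w' z\<bar> \<partial>\<mu>)" by (rule integral_abs_bound)
  also have "\<dots> \<le> (\<integral>z. L * norm (w - w') \<partial>\<mu>)"
    using loss_int[of w] loss_int[of w'] by (intro integral_mono) (auto simp: lip)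
  also have "\<dots> = L * norm (w - w')" by (simp add: prob_space)
  finally show ?thesis .
qed

lemma pop_meas[measurable]: "pop_risk \<mu> loss \<in> borel_measurable borel"
proof -
  have "continuous_on UNIV (pop_risk \<mu> loss)"
    by (rule lipschitz_on_continuous_on[where L=L], rule lipschitz_onI) (use pop_lip L0 in \<open>auto simp: dist_norm\<close>)
  then show ?thesis by (rule borel_measurable_continuous_onI)
qed

lemma subg_nn: "(\<integral>\<^sup>+z. ennreal (exp (l * (loss v z - pop_risk \<mu> loss v))) \<partial>\<mu>) \<le> ennreal (exp (R\<^sup>2 * l\<^sup>2 / 2))"
proof -
  have i: "integrable \<mu> (\<lambda>z. exp (l * (loss v z - (\<integral>y. loss v y \<partial>\<mu>))))"
    and b: "ln (\<integral>z. exp (l * (loss v z - (\<integral>y. loss v y \<partial>\<mu>))) \<partial>\<mu>) \<le> R\<^sup>2 * l\<^sup>2 / 2"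
    using subg[of v] unfolding subgaussian_def by auto
  define X where "X = (\<integral>z. exp (l * (loss v z - (\<integral>y. loss v y \<partial>\<mu>))) \<partial>\<mu>)"
  have "X \<le> exp (R\<^sup>2 * l\<^sup>2 / 2)"
  proof (cases "X > 0")
    case True
    then show ?thesis using b unfolding X_def[symmetric] by (metis exp_ln exp_le_cancel_iff)
  next
    case False
    then show ?thesis by (smt (verit) exp_gt_zero)
  qed
  moreover have "(\<integral>\<^sup>+z. ennreal (exp (l * (loss v z - pop_risk \<mu> loss v))) \<partial>\<mu>) = ennreal X"
    unfolding X_def pop_risk_def using i by (subst nn_integral_eq_integral) auto
  ultimately show ?thesis by (simp add: ennreal_leI)
qed

context
  fixes n T :: nat and c :: real and u :: "nat \<Rightarrow> nat" and i :: nat and w0 :: 'a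
  assumes c0: "c > 0" and uok: "\<And>t. t \<in> {1..T} \<Longrightarrow> u t \<in> {1..n}" and i_in: "i \<in> {1..n}"
begin

abbreviation "SM \<equiv> PiM {1..n} (\<lambda>_. \<mu>)"
abbreviation "XM \<equiv> PiM {1..T} (\<lambda>_. std_gauss :: 'a measure)"
abbreviation "OM \<equiv> SM \<Otimes>\<^sub>M XM"
abbreviation "eta \<equiv> (\<lambda>t::nat. c / real t)"
abbreviation "sg \<equiv> (\<lambda>t::nat. sqrt (c / real t))"
abbreviation "DD \<equiv> {t. 1 \<le> t \<and> u t = i}"

lemma SM_prob: "prob_space SM"
  by (rule prob_space_PiM) (use mu in auto)
lemma XM_prob: "prob_space XM"
  by (rule prob_space_PiM) (use prob_space_std_gauss in auto)
lemma OM_prob: "prob_space OM"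
proof -
  interpret S: prob_space SM by (rule SM_prob)
  interpret X: prob_space XM by (rule XM_prob)
  interpret pair_prob_space SM XM ..
  show ?thesis by unfold_locales
qed

lemma xi_comp_meas[measurable]: "k \<in> {1..T} \<Longrightarrow> (\<lambda>p. snd p k) \<in> borel_measurable OM"
proof -
  assume k: "k \<in> {1..T}"
  have "(\<lambda>x. x k) \<in> borel_measurable XM" using k by (intro measurable_PiM_component_rev) auto
  then show ?thesis by measurable
qed

lemma s_comp_meas: "j \<in> {1..n} \<Longrightarrow> (\<lambda>p. fst p j) \<in> measurable OM \<mu>"
proof -
  assume j: "j \<in> {1..n}"
  have "(\<lambda>x. x j) \<in> measurable SM \<mu>" using j by (rule measurable_component_singleton)
  then show ?thesis by measurable
qed

lemma traj_meas_OM: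
  assumes "t \<le> T"
  shows "(\<lambda>p. sgld_traj w0 et sgg grad (fst p) u (snd p) t) \<in> borel_measurable OM"
proof (rule traj_measurable[where X=snd and S=fst])
  show "(\<lambda>m. snd m k) \<in> borel_measurable OM" if "k \<in> {1..t}" for k
    using that assms by (intro xi_comp_meas) auto
  show "(\<lambda>m. grad (W m) (fst m (u k))) \<in> borel_measurable OM"
    if W: "W \<in> borel_measurable OM" and k: "k \<in> {1..t}" for W k
  proof -
    have "(\<lambda>m. fst m (u k)) \<in> measurable OM \<mu>" using k assms uok by (intro s_comp_meas) auto
    then have "(\<lambda>m. (W m, fst m (u k))) \<in> measurable OM (borel \<Otimes>\<^sub>M \<mu>)" using W by measurable
    from measurable_compose[OF this grad_joint] show ?thesis by simp
  qed
qed

lemma gA_meas_OM: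
  assumes "k \<in> {1..T}"
  shows "(\<lambda>p. gA w0 eta sg grad (fst p) u DD k (snd p)) \<in> borel_measurable OM"
proof -
  have W: "(\<lambda>p. sgld_traj w0 eta sg grad (fst p) u (snd p) (k - 1)) \<in> borel_measurable OM"
    using assms by (intro traj_meas_OM) auto
  have "(\<lambda>m. fst m (u k)) \<in> measurable OM \<mu>" using assms uok by (intro s_comp_meas) auto
  then have "(\<lambda>m. (sgld_traj w0 eta sg grad (fst m) u (snd m) (k - 1), fst m (u k))) \<in> measurable OM (borel \<Otimes>\<^sub>M \<mu>)"
    using W by measurable
  from measurable_compose[OF this grad_joint]
  have "(\<lambda>p. grad (sgld_traj w0 eta sg grad (fst p) u (snd p) (k - 1)) (fst p (u k))) \<in> borel_measurable OM"
    by simp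
  then show ?thesis unfolding gA_def by (intro borel_measurable_scaleR borel_measurable_const)
qed

lemma gA_norm:
  assumes "k \<ge> 1"
  shows "(norm (gA w0 eta sg grad s u DD k xi))\<^sup>2 \<le> (if u k = i then c / real k else 0) * L\<^sup>2"
proof -
  have gen: "(x / sqrt x)\<^sup>2 = x" if "x > 0" for x :: real
    using that by (simp add: power_divide real_sqrt_pow2 power2_eq_square)
  have e: "(c / real k / sqrt (c / real k))\<^sup>2 = c / real k"
    using c0 assms by (intro gen) auto
  define G where "G = grad (sgld_traj w0 eta sg grad s u xi (k - 1)) (s (u k))"
  have GL: "(norm G)\<^sup>2 \<le> L\<^sup>2"
    unfolding G_def using gL by (intro power_mono) auto
  show ?thesis
  proof (cases "u k = i")
    case True
    have "gA w0 eta sg grad s u DD k xi = (c / real k / sqrt (c / real k)) *\<^sub>R G"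
      using True assms unfolding gA_def G_def by simp
    then have "(norm (gA w0 eta sg grad s u DD k xi))\<^sup>2 = (c / real k / sqrt (c / real k))\<^sup>2 * (norm G)\<^sup>2"
      by (simp only: norm_scaleR power_mult_distrib power2_abs)
    also have "\<dots> = c / real k * (norm G)\<^sup>2" by (simp only: e)
    also have "\<dots> \<le> c / real k * L\<^sup>2" using GL c0 by (intro mult_left_mono) auto
    finally show ?thesis using True by simp
  next
    case False
    then show ?thesis unfolding gA_def by simp
  qed
qed

lemma gA_norm1:
  assumes "k \<ge> 1"
  shows "norm (gA w0 eta sg grad s u DD k xi) \<le> sqrt (c / real k) * L"
proof -
  have "norm (gA w0 eta sg grad s u DD k xi) \<le> sqrt ((if u k = i then c / real k else 0) * L\<^sup>2)"
    using gA_norm[OF assms] by (simp add: real_le_rsqrt)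
  also have "\<dots> \<le> sqrt (c / real k * L\<^sup>2)" using c0 by (auto intro: real_sqrt_le_mono)
  also have "\<dots> = sqrt (c / real k) * sqrt (L\<^sup>2)" by (rule real_sqrt_mult)
  also have "\<dots> = sqrt (c / real k) * L" using L0 by simp
  finally show ?thesis .
qed

lemma int_loss0: "integrable OM (\<lambda>p. \<bar>loss w0 (fst p i)\<bar>)"
proof -
  have "integrable SM (\<lambda>s. \<bar>loss w0 (s i)\<bar>)"
    using i_in mu loss_int[of w0] by (intro integrable_PiM_comp[where f="\<lambda>z. \<bar>loss w0 z\<bar>"]) auto
  then show ?thesis
    using SM_prob XM_prob by (intro integrable_pair_fst[where f="\<lambda>s. \<bar>loss w0 (s i)\<bar>"]) (auto intro: prob_space_imp_sigma_finite)
qed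

lemma int_xi: "k \<in> {1..T} \<Longrightarrow> integrable OM (\<lambda>p. norm (snd p k))"
proof -
  assume k: "k \<in> {1..T}"
  have "integrable XM (\<lambda>x. norm (x k))"
    using k prob_space_std_gauss by (intro integrable_PiM_comp[where f=norm] integrable_gauss_norm) auto
  then show ?thesis
    using SM_prob XM_prob by (intro integrable_pair_snd[where f="\<lambda>x. norm (x k)"]) (auto intro: prob_space_imp_sigma_finite)
qed

abbreviation "WW p \<equiv> sgld_traj w0 eta sg grad (fst p) u (snd p) T"
abbreviation "Dfun p \<equiv> loss (WW p) (fst p i) - pop_risk \<mu> loss (WW p)"

lemma Dfun_meas[measurable]: "(\<lambda>p. Dfun p) \<in> borel_measurable OM"
proof -
  have W[measurable]: "(\<lambda>p. WW p) \<in> borel_measurable OM" by (rule traj_meas_OM) auto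
  have "(\<lambda>p. fst p i) \<in> measurable OM \<mu>" using i_in by (rule s_comp_meas)
  then have "(\<lambda>p. (WW p, fst p i)) \<in> measurable OM (borel \<Otimes>\<^sub>M \<mu>)" by measurable
  from measurable_compose[OF this lossm]
  have "(\<lambda>p. loss (WW p) (fst p i)) \<in> borel_measurable OM" by simp
  then show ?thesis by measurable
qed

lemma Dfun_int: "integrable OM (\<lambda>p. Dfun p)"
proof (rule Bochner_Integration.integrable_bound)
  interpret prob_space OM by (rule OM_prob)
  show "integrable OM (\<lambda>p. \<bar>loss w0 (fst p i)\<bar> + \<bar>pop_risk \<mu> loss w0\<bar>
      + 2 * L * (\<Sum>k=1..T. \<bar>eta k\<bar> * L + \<bar>sg k\<bar> * norm (snd p k)))"
    using int_loss0 int_xi by (intro Bochner_Integration.integrable_add Bochner_Integration.integrable_mult_right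
        Bochner_Integration.integrable_sum integrable_const) auto
  show "AE p in OM. norm (Dfun p) \<le> norm (\<bar>loss w0 (fst p i)\<bar> + \<bar>pop_risk \<mu> loss w0\<bar>
      + 2 * L * (\<Sum>k=1..T. \<bar>eta k\<bar> * L + \<bar>sg k\<bar> * norm (snd p k)))"
  proof (rule AE_I2)
    fix p
    have b: "norm (WW p - w0) \<le> (\<Sum>k=1..T. \<bar>eta k\<bar> * L + \<bar>sg k\<bar> * norm (snd p k))"
      by (rule traj_bound[OF gL])
    have l1: "\<bar>loss (WW p) (fst p i) - loss w0 (fst p i)\<bar> \<le> L * norm (WW p - w0)" by (rule lip)
    have l2: "\<bar>pop_risk \<mu> loss (WW p) - pop_risk \<mu> loss w0\<bar> \<le> L * norm (WW p - w0)" by (rule pop_lip)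
    have "L * norm (WW p - w0) \<le> L * (\<Sum>k=1..T. \<bar>eta k\<bar> * L + \<bar>sg k\<bar> * norm (snd p k))"
      using b L0 by (rule mult_left_mono)
    moreover have "0 \<le> (\<Sum>k=1..T. \<bar>eta k\<bar> * L + \<bar>sg k\<bar> * norm (snd p k))"
      using L0 by (intro sum_nonneg) auto
    moreover have "0 \<le> L * (\<Sum>k=1..T. \<bar>eta k\<bar> * L + \<bar>sg k\<bar> * norm (snd p k))"
      using L0 calculation(2) by (rule mult_nonneg_nonneg)
    ultimately show "norm (Dfun p) \<le> norm (\<bar>loss w0 (fst p i)\<bar> + \<bar>pop_risk \<mu> loss w0\<bar>
      + 2 * L * (\<Sum>k=1..T. \<bar>eta k\<bar> * L + \<bar>sg k\<bar> * norm (snd p k)))"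
      using l1 l2 unfolding real_norm_def by linarith
  qed
qed (rule Dfun_meas)

lemma gA_inner_int: "k \<in> {1..T} \<Longrightarrow> integrable OM (\<lambda>p. gA w0 eta sg grad (fst p) u DD k (snd p) \<bullet> snd p k)"
proof -
  assume k: "k \<in> {1..T}"
  note [measurable] = gA_meas_OM[OF k] xi_comp_meas[OF k]
  show ?thesis
  proof (rule Bochner_Integration.integrable_bound)
    show "integrable OM (\<lambda>p. sqrt (c / real k) * L * norm (snd p k))"
      using int_xi[OF k] by auto
    show "AE p in OM. norm (gA w0 eta sg grad (fst p) u DD k (snd p) \<bullet> snd p k) \<le> norm (sqrt (c / real k) * L * norm (snd p k))"
    proof (rule AE_I2)
      fix p
      have "\<bar>gA w0 eta sg grad (fst p) u DD k (snd p) \<bullet> snd p k\<bar> \<le> norm (gA w0 eta sg grad (fst p) u DD k (snd p)) * norm (snd p k)"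
        by (rule Cauchy_Schwarz_ineq2)
      also have "\<dots> \<le> sqrt (c / real k) * L * norm (snd p k)"
        using k by (intro mult_right_mono gA_norm1) auto
      finally show "norm (gA w0 eta sg grad (fst p) u DD k (snd p) \<bullet> snd p k) \<le> norm (sqrt (c / real k) * L * norm (snd p k))"
        by simp
    qed
  qed measurable
qed

lemma gA_sq_int: "k \<in> {1..T} \<Longrightarrow> integrable OM (\<lambda>p. (norm (gA w0 eta sg grad (fst p) u DD k (snd p)))\<^sup>2 / 2)"
proof -
  assume k: "k \<in> {1..T}"
  note [measurable] = gA_meas_OM[OF k]
  interpret prob_space OM by (rule OM_prob)
  show ?thesis
  proof (rule integrable_const_bound[where B="c / real k * L\<^sup>2"])
    show "AE p in OM. norm ((norm (gA w0 eta sg grad (fst p) u DD k (snd p)))\<^sup>2 / 2) \<le> c / real k * L\<^sup>2"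
    proof (rule AE_I2)
      fix p
      have "(norm (gA w0 eta sg grad (fst p) u DD k (snd p)))\<^sup>2 \<le> (if u k = i then c / real k else 0) * L\<^sup>2"
        using k by (intro gA_norm) auto
      also have "\<dots> \<le> c / real k * L\<^sup>2" using c0 by auto
      finally show "norm ((norm (gA w0 eta sg grad (fst p) u DD k (snd p)))\<^sup>2 / 2) \<le> c / real k * L\<^sup>2"
        by (rule half_le[rotated]) simp
    qed
  qed measurable
qed

lemma sgDD: "k \<in> DD \<Longrightarrow> sg k \<noteq> 0" using c0 by auto

lemma gA_inner_zero: "k \<in> {1..T} \<Longrightarrow> (\<integral>p. gA w0 eta sg grad (fst p) u DD k (snd p) \<bullet> snd p k \<partial>OM) = 0"
proof -
  assume k: "k \<in> {1..T}"
  interpret S: prob_space SM by (rule SM_prob)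
  interpret X: prob_space XM by (rule XM_prob)
  interpret pair_sigma_finite SM XM ..
  interpret P: product_sigma_finite "\<lambda>_::nat. std_gauss :: 'a measure"
    unfolding product_sigma_finite_def using prob_space_std_gauss prob_space_imp_sigma_finite by blast
  have inner: "(\<integral>x. gA w0 eta sg grad s u DD k x \<bullet> x k \<partial>XM) = 0" for s
  proof -
    have I: "{1..T} = insert k ({1..T} - {k})" using k by auto
    have gm: "(\<lambda>x. gA w0 eta sg grad s u DD k x) \<in> borel_measurable XM"
      using gA_meas[OF grad_meas_w sgDD, where k=k and T=T and ?w0.0=w0 and eta=eta and s=s and u=u] k by auto
    have cm: "(\<lambda>x. x k) \<in> borel_measurable XM" using k by (intro measurable_PiM_component_rev) auto
    have int: "integrable XM (\<lambda>x. gA w0 eta sg grad s u DD k x \<bullet> x k)"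
    proof (rule Bochner_Integration.integrable_bound)
      show "integrable XM (\<lambda>x. sqrt (c / real k) * L * norm (x k))"
        using k prob_space_std_gauss by (intro Bochner_Integration.integrable_mult_right integrable_PiM_comp[where f=norm] integrable_gauss_norm) auto
      show "AE x in XM. norm (gA w0 eta sg grad s u DD k x \<bullet> x k) \<le> norm (sqrt (c / real k) * L * norm (x k))"
      proof (rule AE_I2)
        fix x
        have "\<bar>gA w0 eta sg grad s u DD k x \<bullet> x k\<bar> \<le> norm (gA w0 eta sg grad s u DD k x) * norm (x k)"
          by (rule Cauchy_Schwarz_ineq2)
        also have "\<dots> \<le> sqrt (c / real k) * L * norm (x k)"
          using k by (intro mult_right_mono gA_norm1) auto
        finally show "norm (gA w0 eta sg grad s u DD k x \<bullet> x k) \<le> norm (sqrt (c / real k) * L * norm (x k))" by simp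
      qed
      show "(\<lambda>x. gA w0 eta sg grad s u DD k x \<bullet> x k) \<in> borel_measurable XM"
        using gm cm by (rule borel_measurable_inner)
    qed
    have "(\<integral>x. gA w0 eta sg grad s u DD k x \<bullet> x k \<partial>XM)
        = (\<integral>x. (\<integral>y. gA w0 eta sg grad s u DD k (x(k := y)) \<bullet> (x(k := y)) k \<partial>std_gauss) \<partial>PiM ({1..T} - {k}) (\<lambda>_. std_gauss))"
    proof -
      have int': "integrable (PiM (insert k ({1..T} - {k})) (\<lambda>_. std_gauss :: 'a measure)) (\<lambda>x. gA w0 eta sg grad s u DD k x \<bullet> x k)"
        using int by (simp only: I[symmetric])
      show ?thesis using P.product_integral_insert[OF _ _ int'] by (simp only: I[symmetric]) simp
    qed
    also have "\<dots> = (\<integral>x. 0 \<partial>PiM ({1..T} - {k}) (\<lambda>_. std_gauss :: 'a measure))"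
    proof (rule Bochner_Integration.integral_cong[OF refl])
      fix x
      have "gA w0 eta sg grad s u DD k (x(k := y)) = gA w0 eta sg grad s u DD k x" for y
        by (rule gA_cong_xi) auto
      then show "(\<integral>y. gA w0 eta sg grad s u DD k (x(k := y)) \<bullet> (x(k := y)) k \<partial>std_gauss) = 0"
        by (simp add: integral_gauss_inner)
    qed
    finally show ?thesis by simp
  qed
  have "(\<integral>p. gA w0 eta sg grad (fst p) u DD k (snd p) \<bullet> snd p k \<partial>OM)
      = (\<integral>s. (\<integral>x. gA w0 eta sg grad s u DD k x \<bullet> x k \<partial>XM) \<partial>SM)"
    using integral_fst'[OF gA_inner_int[OF k]] by simp
  also have "\<dots> = (\<integral>s. 0 \<partial>SM)" by (rule Bochner_Integration.integral_cong[OF refl]) (rule inner)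
  finally show ?thesis by simp
qed

lemma trajD_indep:
  "sgld_traj w0 (etaD DD et) sgg g (s(i := z)) u xi t = sgld_traj w0 (etaD DD et) sgg g s u xi t"
  by (induction t) (auto simp: etaD_def)

abbreviation "gSp p \<equiv> gS w0 eta sg grad (fst p) u DD T (snd p)"

lemma gS_meas_OM[measurable]: "(\<lambda>p. gSp p) \<in> borel_measurable OM"
proof -
  have "(\<lambda>p. gA w0 eta sg grad (fst p) u DD k (snd p) \<bullet> snd p k - (norm (gA w0 eta sg grad (fst p) u DD k (snd p)))\<^sup>2 / 2)
      \<in> borel_measurable OM" if k: "k \<in> {1..T}" for k
  proof -
    note [measurable] = gA_meas_OM[OF k] xi_comp_meas[OF k]
    show ?thesis by measurable
  qed
  then show ?thesis unfolding gS_def by (intro borel_measurable_sum) auto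
qed

lemma traj_meas_SM:
  assumes "xi \<in> space XM" "t \<le> T"
  shows "(\<lambda>s. sgld_traj w0 et sgg grad s u xi t) \<in> borel_measurable SM"
proof -
  have "(\<lambda>s. (s, xi)) \<in> measurable SM OM" using assms(1) by (rule measurable_Pair2')
  from measurable_compose[OF this traj_meas_OM[OF assms(2)]] show ?thesis by simp
qed

lemma exp_bound:
  "(\<integral>\<^sup>+p. ennreal (exp (l * Dfun p + gSp p)) \<partial>OM) \<le> ennreal (exp (R\<^sup>2 * l\<^sup>2 / 2))"
proof -
  interpret S: prob_space SM by (rule SM_prob)
  interpret X: prob_space XM by (rule XM_prob)
  interpret pair_sigma_finite SM XM ..
  let ?V = "\<lambda>s xi. sgld_traj w0 (etaD DD eta) sg grad s u xi T"
  let ?F = "\<lambda>z w. ennreal (exp (l * (loss w z - pop_risk \<mu> loss w)))"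
  have Vm[measurable]: "(\<lambda>p. ?V (fst p) (snd p)) \<in> borel_measurable OM" by (rule traj_meas_OM) auto
  have fim: "(\<lambda>p. fst p i) \<in> measurable OM \<mu>" using i_in by (rule s_comp_meas)
  have lossV: "(\<lambda>p. loss (?V (fst p) (snd p)) (fst p i)) \<in> borel_measurable OM"
  proof -
    have "(\<lambda>p. (?V (fst p) (snd p), fst p i)) \<in> measurable OM (borel \<Otimes>\<^sub>M \<mu>)" using fim by measurable
    from measurable_compose[OF this lossm] show ?thesis by simp
  qed
  have "(\<integral>\<^sup>+p. ennreal (exp (l * Dfun p + gSp p)) \<partial>OM)
      = (\<integral>\<^sup>+s. (\<integral>\<^sup>+xi. ennreal (exp (l * Dfun (s, xi) + gSp (s, xi))) \<partial>XM) \<partial>SM)"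
  proof -
    have "(\<lambda>p. l * Dfun p + gSp p) \<in> borel_measurable OM"
      using Dfun_meas gS_meas_OM by (intro borel_measurable_add borel_measurable_times borel_measurable_const)
    then have "(\<lambda>p. ennreal (exp (l * Dfun p + gSp p))) \<in> borel_measurable OM"
      by (intro measurable_compose[where f="\<lambda>p. l * Dfun p + gSp p" and g="\<lambda>x. ennreal (exp x)"]) auto
    from X.nn_integral_fst[OF this] show ?thesis by simp
  qed
  also have "\<dots> = (\<integral>\<^sup>+s. (\<integral>\<^sup>+xi. ?F (s i) (?V s xi) \<partial>XM) \<partial>SM)"
  proof (rule nn_integral_cong)
    fix s
    have "(\<integral>\<^sup>+xi. ennreal (exp (l * Dfun (s, xi) + gSp (s, xi))) \<partial>XM)
        = (\<integral>\<^sup>+xi. ?F (s i) (sgld_traj w0 eta sg grad s u xi T) * ennreal (exp (gS w0 eta sg grad s u DD T xi)) \<partial>XM)"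
    proof (intro nn_integral_cong)
      fix xi
      have eq: "l * Dfun (s, xi) + gSp (s, xi) = l * (loss (sgld_traj w0 eta sg grad s u xi T) (s i) - pop_risk \<mu> loss (sgld_traj w0 eta sg grad s u xi T)) + gS w0 eta sg grad s u DD T xi"
        by simp
      have e: "exp (l * Dfun (s, xi) + gSp (s, xi)) = exp (l * (loss (sgld_traj w0 eta sg grad s u xi T) (s i) - pop_risk \<mu> loss (sgld_traj w0 eta sg grad s u xi T))) * exp (gS w0 eta sg grad s u DD T xi)"
        by (simp only: eq exp_add)
      show "ennreal (exp (l * Dfun (s, xi) + gSp (s, xi))) = ?F (s i) (sgld_traj w0 eta sg grad s u xi T) * ennreal (exp (gS w0 eta sg grad s u DD T xi))"
        unfolding e by (rule ennreal_mult[OF exp_ge_zero exp_ge_zero])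
    qed
    also have "\<dots> = (\<integral>\<^sup>+xi. ?F (s i) (?V s xi) \<partial>XM)"
      by (rule girsanov[OF grad_meas_w sgDD]) measurable
    finally show "(\<integral>\<^sup>+xi. ennreal (exp (l * Dfun (s, xi) + gSp (s, xi))) \<partial>XM) = (\<integral>\<^sup>+xi. ?F (s i) (?V s xi) \<partial>XM)" .
  qed
  also have "\<dots> = (\<integral>\<^sup>+xi. (\<integral>\<^sup>+s. ?F (s i) (?V s xi) \<partial>SM) \<partial>XM)"
  proof (rule Fubini'[symmetric])
    have "(\<lambda>p. ?F (fst p i) (?V (fst p) (snd p))) \<in> borel_measurable OM"
      using lossV by measurable
    then show "(\<lambda>(s, xi). ?F (s i) (?V s xi)) \<in> borel_measurable OM" by (simp add: case_prod_beta)
  qed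
  also have "\<dots> \<le> (\<integral>\<^sup>+xi. ennreal (exp (R\<^sup>2 * l\<^sup>2 / 2)) \<partial>XM)"
  proof (rule nn_integral_mono)
    fix xi assume xi: "xi \<in> space XM"
    define I where "I = {1..n} - {i}"
    have I: "{1..n} = insert i I" "i \<notin> I" "finite I" using i_in by (auto simp: I_def)
    interpret P: product_sigma_finite "\<lambda>_::nat. \<mu>"
      unfolding product_sigma_finite_def using mu prob_space_imp_sigma_finite by blast
    interpret PI: prob_space "PiM I (\<lambda>_. \<mu>)" by (rule prob_space_PiM) (use mu in auto)
    have m: "(\<lambda>s. ?F (s i) (?V s xi)) \<in> borel_measurable (PiM (insert i I) (\<lambda>_. \<mu>))"
    proof -
      have pm: "(\<lambda>s. (s, xi)) \<in> measurable SM OM" using xi by (rule measurable_Pair2')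
      have "(\<lambda>p. ?F (fst p i) (?V (fst p) (snd p))) \<in> borel_measurable OM"
        using lossV by measurable
      from measurable_compose[OF pm this]
      have "(\<lambda>s. ?F (s i) (?V s xi)) \<in> borel_measurable SM" by simp
      then show ?thesis by (simp only: I(1))
    qed
    have "(\<integral>\<^sup>+s. ?F (s i) (?V s xi) \<partial>SM) = (\<integral>\<^sup>+s. ?F (s i) (?V s xi) \<partial>PiM (insert i I) (\<lambda>_. \<mu>))"
      by (simp only: I(1))
    also have "\<dots> = (\<integral>\<^sup>+s. (\<integral>\<^sup>+z. ?F ((s(i := z)) i) (?V (s(i := z)) xi) \<partial>\<mu>) \<partial>PiM I (\<lambda>_. \<mu>))"
      by (rule P.product_nn_integral_insert[OF I(3) I(2) m])
    also have "\<dots> = (\<integral>\<^sup>+s. (\<integral>\<^sup>+z. ?F z (?V s xi) \<partial>\<mu>) \<partial>PiM I (\<lambda>_. \<mu>))"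
      by (simp only: trajD_indep fun_upd_same)
    also have "\<dots> \<le> (\<integral>\<^sup>+s. ennreal (exp (R\<^sup>2 * l\<^sup>2 / 2)) \<partial>PiM I (\<lambda>_. \<mu>))"
      by (intro nn_integral_mono subg_nn)
    also have "\<dots> = ennreal (exp (R\<^sup>2 * l\<^sup>2 / 2))" using PI.emeasure_space_1 by simp
    finally show "(\<integral>\<^sup>+s. ?F (s i) (?V s xi) \<partial>SM) \<le> ennreal (exp (R\<^sup>2 * l\<^sup>2 / 2))" .
  qed
  also have "\<dots> = ennreal (exp (R\<^sup>2 * l\<^sup>2 / 2))" using X.emeasure_space_1 by simp
  finally show ?thesis .
qed

lemma per_i_lin:
  "l * (\<integral>p. Dfun p \<partial>OM) \<le> l\<^sup>2 * (R\<^sup>2 / 2) + (\<Sum>k=1..T. (if u k = i then c / real k else 0) * L\<^sup>2 / 2)"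
proof -
  interpret prob_space OM by (rule OM_prob)
  let ?A = "\<lambda>k p. gA w0 eta sg grad (fst p) u DD k (snd p)"
  have iA: "integrable OM (\<lambda>p. ?A k p \<bullet> snd p k)" if "k \<in> {1..T}" for k using gA_inner_int that .
  have iB: "integrable OM (\<lambda>p. (norm (?A k p))\<^sup>2 / 2)" if "k \<in> {1..T}" for k using gA_sq_int that .
  have gS_eq: "gSp p = (\<Sum>k=1..T. ?A k p \<bullet> snd p k - (norm (?A k p))\<^sup>2 / 2)" for p
    unfolding gS_def ..
  have iS: "integrable OM (\<lambda>p. \<Sum>k=1..T. ?A k p \<bullet> snd p k - (norm (?A k p))\<^sup>2 / 2)"
    using iA iB by (intro Bochner_Integration.integrable_sum Bochner_Integration.integrable_diff) auto
  have iY: "integrable OM (\<lambda>p. l * Dfun p + gSp p)"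
    unfolding gS_eq using iS Dfun_int by (intro Bochner_Integration.integrable_add Bochner_Integration.integrable_mult_right)
  have "(\<integral>p. l * Dfun p + gSp p \<partial>OM) \<le> ln (exp (R\<^sup>2 * l\<^sup>2 / 2))"
    by (rule jensen_exp[OF OM_prob iY exp_bound]) simp
  then have Yb: "(\<integral>p. l * Dfun p + gSp p \<partial>OM) \<le> R\<^sup>2 * l\<^sup>2 / 2" by simp
  have "(\<integral>p. l * Dfun p + gSp p \<partial>OM) = l * (\<integral>p. Dfun p \<partial>OM) + (\<integral>p. gSp p \<partial>OM)"
    using Dfun_int iS unfolding gS_eq by simp
  also have "(\<integral>p. gSp p \<partial>OM) = (\<Sum>k=1..T. (\<integral>p. ?A k p \<bullet> snd p k \<partial>OM) - (\<integral>p. (norm (?A k p))\<^sup>2 / 2 \<partial>OM))"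
    unfolding gS_eq using iA iB by (subst Bochner_Integration.integral_sum) (auto intro!: sum.cong)
  also have "\<dots> = (\<Sum>k=1..T. 0 - (\<integral>p. (norm (?A k p))\<^sup>2 / 2 \<partial>OM))"
  proof (rule sum.cong[OF refl])
    fix k assume k: "k \<in> {1..T}"
    show "(\<integral>p. ?A k p \<bullet> snd p k \<partial>OM) - (\<integral>p. (norm (?A k p))\<^sup>2 / 2 \<partial>OM) = 0 - (\<integral>p. (norm (?A k p))\<^sup>2 / 2 \<partial>OM)"
      by (subst gA_inner_zero[OF k]) (rule refl)
  qed
  also have "\<dots> = - (\<Sum>k=1..T. (\<integral>p. (norm (?A k p))\<^sup>2 / 2 \<partial>OM))"
    by (simp only: diff_0 sum_negf)
  finally have "l * (\<integral>p. Dfun p \<partial>OM) = (\<integral>p. l * Dfun p + gSp p \<partial>OM) + (\<Sum>k=1..T. (\<integral>p. (norm (?A k p))\<^sup>2 / 2 \<partial>OM))"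
    by simp
  also have "\<dots> \<le> R\<^sup>2 * l\<^sup>2 / 2 + (\<Sum>k=1..T. (if u k = i then c / real k else 0) * L\<^sup>2 / 2)"
  proof (rule add_mono[OF Yb sum_mono])
    fix k assume k: "k \<in> {1..T}"
    have "(\<integral>p. (norm (?A k p))\<^sup>2 / 2 \<partial>OM) \<le> (\<integral>p. (if u k = i then c / real k else 0) * L\<^sup>2 / 2 \<partial>OM)"
    proof (rule integral_mono[OF iB[OF k]])
      show "integrable OM (\<lambda>p. (if u k = i then c / real k else 0) * L\<^sup>2 / 2)" by (rule integrable_const)
      fix p
      have "(norm (?A k p))\<^sup>2 \<le> (if u k = i then c / real k else 0) * L\<^sup>2"
        using k by (intro gA_norm) auto
      then show "(norm (?A k p))\<^sup>2 / 2 \<le> (if u k = i then c / real k else 0) * L\<^sup>2 / 2"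
        by (rule divide_right_mono) simp
    qed
    also have "\<dots> = (if u k = i then c / real k else 0) * L\<^sup>2 / 2" using prob_space by simp
    finally show "(\<integral>p. (norm (?A k p))\<^sup>2 / 2 \<partial>OM) \<le> (if u k = i then c / real k else 0) * L\<^sup>2 / 2" .
  qed
  finally show ?thesis by (simp add: algebra_simps)
qed

lemma per_i:
  "\<bar>\<integral>p. Dfun p \<partial>OM\<bar> \<le> R * L * sqrt (c * (\<Sum>k=1..T. (if u k = i then 1 / real k else 0)))"
proof -
  define S where "S = (\<Sum>k=1..T. (if u k = i then 1 / real k else 0))"
  have S0: "S \<ge> 0" unfolding S_def by (intro sum_nonneg) auto
  have b: "(\<Sum>k=1..T. (if u k = i then c / real k else 0) * L\<^sup>2 / 2) = c * L\<^sup>2 * S / 2"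
    unfolding S_def sum_distrib_left sum_divide_distrib sum_distrib_right by (intro sum.cong) auto
  have "\<bar>\<integral>p. Dfun p \<partial>OM\<bar> \<le> 2 * sqrt (R\<^sup>2 / 2 * (c * L\<^sup>2 * S / 2))"
    using per_i_lin S0 c0 unfolding b by (intro sq_opt) auto
  also have "\<dots> = sqrt ((R * L)\<^sup>2 * (c * S))"
  proof -
    have "R\<^sup>2 / 2 * (c * L\<^sup>2 * S / 2) = (R * L)\<^sup>2 * (c * S) / 4" by (simp add: power_mult_distrib)
    then have "sqrt (R\<^sup>2 / 2 * (c * L\<^sup>2 * S / 2)) = sqrt ((R * L)\<^sup>2 * (c * S)) / 2"
      by (simp add: real_sqrt_divide)
    then show ?thesis by simp
  qed
  also have "\<dots> = R * L * sqrt (c * S)" using R0 L0 by (simp add: real_sqrt_mult)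
  finally show ?thesis unfolding S_def .
qed

end

context
  fixes n T :: nat and c :: real and u :: "nat \<Rightarrow> nat" and w0 :: 'a
  assumes c0': "c > 0" and uok': "\<And>t. t \<in> {1..T} \<Longrightarrow> u t \<in> {1..n}" and n1: "n \<ge> 1"
begin

lemma per_u:
  defines "OM' \<equiv> PiM {1..n} (\<lambda>_. \<mu>) \<Otimes>\<^sub>M PiM {1..T} (\<lambda>_. std_gauss :: 'a measure)"
    and "W' \<equiv> \<lambda>p. sgld_traj w0 (\<lambda>t. c / real t) (\<lambda>t. sqrt (c / real t)) grad (fst p) u (snd p) T"
  shows "integrable OM' (\<lambda>p. pop_risk \<mu> loss (W' p) - emp_risk loss n (fst p) (W' p))"
    and "\<bar>\<integral>p. pop_risk \<mu> loss (W' p) - emp_risk loss n (fst p) (W' p) \<partial>OM'\<bar>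
         \<le> R * L / real n * (\<Sum>i=1..n. sqrt (c * (\<Sum>k=1..T. (if u k = i then 1 / real k else 0))))"
proof -
  let ?D = "\<lambda>i p. loss (W' p) (fst p i) - pop_risk \<mu> loss (W' p)"
  have Di: "integrable OM' (?D i)" if "i \<in> {1..n}" for i
    unfolding OM'_def W'_def by (rule Dfun_int[OF c0' uok' that])
  have Db: "\<bar>\<integral>p. ?D i p \<partial>OM'\<bar> \<le> R * L * sqrt (c * (\<Sum>k=1..T. (if u k = i then 1 / real k else 0)))"
    if "i \<in> {1..n}" for i
    unfolding OM'_def W'_def by (rule per_i[OF c0' uok' that])
  have eq: "pop_risk \<mu> loss (W' p) - emp_risk loss n (fst p) (W' p) = - (\<Sum>i=1..n. ?D i p) / real n" for p
  proof -
    have "(\<Sum>i=1..n. ?D i p) = (\<Sum>i=1..n. loss (W' p) (fst p i)) - real n * pop_risk \<mu> loss (W' p)"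
      by (simp add: sum_subtractf)
    note h = this
    have gen: "P - A / real n = - Ds / real n" if "Ds = A - real n * P" for Ds A P :: real
    proof -
      have "real n \<noteq> 0" using n1 by simp
      then have "A / real n = (Ds + real n * P) / real n" using that by simp
      also have "\<dots> = Ds / real n + P" using \<open>real n \<noteq> 0\<close> by (simp add: add_divide_distrib)
      finally show ?thesis by simp
    qed
    show ?thesis unfolding emp_risk_def by (rule gen[OF h])
  qed
  show "integrable OM' (\<lambda>p. pop_risk \<mu> loss (W' p) - emp_risk loss n (fst p) (W' p))"
    unfolding eq using Di by (intro Bochner_Integration.integrable_divide Bochner_Integration.integrable_minus Bochner_Integration.integrable_sum) auto
  have "(\<integral>p. pop_risk \<mu> loss (W' p) - emp_risk loss n (fst p) (W' p) \<partial>OM') = - (\<Sum>i=1..n. (\<integral>p. ?D i p \<partial>OM')) / real n"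
    unfolding eq using Di by (simp add: Bochner_Integration.integral_sum)
  then have "\<bar>\<integral>p. pop_risk \<mu> loss (W' p) - emp_risk loss n (fst p) (W' p) \<partial>OM'\<bar> = \<bar>\<Sum>i=1..n. (\<integral>p. ?D i p \<partial>OM')\<bar> / real n"
    by simp
  also have "\<dots> \<le> (\<Sum>i=1..n. \<bar>\<integral>p. ?D i p \<partial>OM'\<bar>) / real n"
    by (intro divide_right_mono sum_abs) simp
  also have "\<dots> \<le> (\<Sum>i=1..n. R * L * sqrt (c * (\<Sum>k=1..T. (if u k = i then 1 / real k else 0)))) / real n"
    using Db by (intro divide_right_mono sum_mono) auto
  also have "\<dots> = R * L / real n * (\<Sum>i=1..n. sqrt (c * (\<Sum>k=1..T. (if u k = i then 1 / real k else 0))))"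
    by (simp add: sum_distrib_left sum_divide_distrib)
  finally show "\<bar>\<integral>p. pop_risk \<mu> loss (W' p) - emp_risk loss n (fst p) (W' p) \<partial>OM'\<bar>
         \<le> R * L / real n * (\<Sum>i=1..n. sqrt (c * (\<Sum>k=1..T. (if u k = i then 1 / real k else 0))))" .
qed

end

end

lemma harm_bound: assumes "m \<ge> 1" shows "(\<Sum>k=1..m. 1 / real k) \<le> 1 + ln (real m)"
  using assms
proof (induction m)
  case 0 then show ?case by simp
next
  case (Suc m)
  show ?case
  proof (cases "m = 0")
    case True then show ?thesis by simp
  next
    case False
    then have m: "real m \<ge> 1" by simp
    have IH: "(\<Sum>k=1..m. 1 / real k) \<le> 1 + ln (real m)" using Suc False by simp
    have "ln (real m / real (Suc m)) \<le> real m / real (Suc m) - 1"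
      using m by (intro ln_le_minus_one) auto
    also have "\<dots> = - (1 / real (Suc m))" by (simp add: field_simps)
    finally have "1 / real (Suc m) \<le> ln (real (Suc m)) - ln (real m)"
      using m by (simp add: ln_div)
    then show ?thesis using IH by simp
  qed
qed

lemma sum_epochs: "(\<Sum>t=1..(n::nat)*Q. f t) = (\<Sum>k<Q. \<Sum>m=1..n. f (k * n + m) :: real)"
proof (induction Q)
  case 0 then show ?case by simp
next
  case (Suc Q)
  have "(\<Sum>t=1..n*Suc Q. f t) = (\<Sum>t=1..n*Q + n. f t)" by (simp add: algebra_simps)
  also have "\<dots> = (\<Sum>t=1..n*Q. f t) + (\<Sum>t=n*Q+1..n*Q + n. f t)"
    by (rule sum.ub_add_nat) simp
  also have "(\<Sum>t=n*Q+1..n*Q + n. f t) = (\<Sum>m=1..n. f (Q * n + m))"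
    using sum.shift_bounds_cl_nat_ivl[of f 1 "n*Q" n] by (simp add: add.commute mult.commute)
  finally show ?case using Suc by simp
qed

lemma S_bound:
  fixes u :: "nat \<Rightarrow> nat"
  assumes n: "n \<ge> 1" and K: "K \<ge> 2"
    and bij: "\<And>k. k \<in> {1..K} \<Longrightarrow> bij_betw (\<lambda>j. u ((k - 1) * n + j)) {1..n} {1..n}"
    and j: "j \<in> {1..n}"
  shows "(\<Sum>t=1..n*K. (if u t = u j then 1 / real t else 0)) \<le> 1 / real j + (ln (real K - 1) + 1) / real n"
proof -
  let ?f = "\<lambda>t. (if u t = u j then 1 / real t else 0)"
  have epoch: "(\<Sum>m=1..n. ?f (k * n + m)) = (\<Sum>m\<in>{m\<in>{1..n}. u (k * n + m) = u j}. 1 / real (k * n + m))" for k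
    by (simp add: sum.If_cases Int_def conj_commute)
  have card1: "card {m\<in>{1..n}. u (k * n + m) = u j} \<le> 1" if k: "k < K" for k
  proof -
    have "inj_on (\<lambda>m. u ((Suc k - 1) * n + m)) {1..n}"
      using bij[of "Suc k"] k bij_betw_def by auto
    then have inj: "inj_on (\<lambda>m. u (k * n + m)) {1..n}" by simp
    have "card {m\<in>{1..n}. u (k * n + m) = u j} \<le> Suc 0"
    proof (subst card_le_Suc0_iff_eq)
      show "finite {m\<in>{1..n}. u (k * n + m) = u j}" by auto
      show "\<forall>x\<in>{m\<in>{1..n}. u (k * n + m) = u j}. \<forall>y\<in>{m\<in>{1..n}. u (k * n + m) = u j}. x = y"
      proof (intro ballI)
        fix x y assume x: "x \<in> {m\<in>{1..n}. u (k * n + m) = u j}" and y: "y \<in> {m\<in>{1..n}. u (k * n + m) = u j}"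
        then have "u (k * n + x) = u (k * n + y)" by simp
        from inj_onD[OF inj this] x y show "x = y" by simp
      qed
    qed
    then show ?thesis by simp
  qed
  have e0: "(\<Sum>m=1..n. ?f (0 * n + m)) = 1 / real j"
  proof -
    have "inj_on (\<lambda>m. u ((Suc 0 - 1) * n + m)) {1..n}"
      using bij[of 1] K bij_betw_def by auto
    then have inj: "inj_on u {1..n}" by simp
    have "{m\<in>{1..n}. u (0 * n + m) = u j} = {j}" using j inj by (auto dest: inj_onD)
    then show ?thesis using epoch[of 0] by simp
  qed
  have ek: "(\<Sum>m=1..n. ?f (k * n + m)) \<le> 1 / real n * (1 / real k)" if k: "k < K" "k \<ge> 1" for k
  proof -
    have "(\<Sum>m\<in>{m\<in>{1..n}. u (k * n + m) = u j}. 1 / real (k * n + m))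
        \<le> (\<Sum>m\<in>{m\<in>{1..n}. u (k * n + m) = u j}. 1 / real (k * n))"
      using k n by (intro sum_mono frac_le) auto
    also have "\<dots> = card {m\<in>{1..n}. u (k * n + m) = u j} * (1 / real (k * n))" by simp
    also have "\<dots> \<le> 1 * (1 / real (k * n))"
      using card1[OF k(1)] by (intro mult_right_mono) auto
    finally show ?thesis using epoch[of k] by (simp add: field_simps)
  qed
  have "(\<Sum>t=1..n*K. ?f t) = (\<Sum>k<K. \<Sum>m=1..n. ?f (k * n + m))" by (rule sum_epochs)
  also have "\<dots> = (\<Sum>m=1..n. ?f (0 * n + m)) + (\<Sum>k=1..<K. \<Sum>m=1..n. ?f (k * n + m))"
  proof -
    have "{..<K} = insert 0 {1..<K}" using K by auto
    then show ?thesis by simp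
  qed
  also have "\<dots> \<le> 1 / real j + (\<Sum>k=1..<K. 1 / real n * (1 / real k))"
    using e0 ek by (intro add_mono sum_mono) auto
  also have "(\<Sum>k=1..<K. 1 / real n * (1 / real k)) = 1 / real n * (\<Sum>k=1..K-1. 1 / real k)"
    using K by (simp add: sum_distrib_left atLeastLessThanSuc_atLeastAtMost[symmetric])
  also have "\<dots> \<le> 1 / real n * (1 + ln (real (K - 1)))"
    using K by (intro mult_left_mono harm_bound) auto
  also have "\<dots> = (ln (real K - 1) + 1) / real n" using K by (simp add: of_nat_diff)
  finally show ?thesis by simp
qed

lemma abs_integral_AE_bound:
  fixes f :: "'x \<Rightarrow> real"
  assumes "prob_space M" "B \<ge> 0" "AE x in M. \<bar>f x\<bar> \<le> B"
  shows "\<bar>\<integral>x. f x \<partial>M\<bar> \<le> B"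
proof (cases "integrable M f")
  case True
  interpret prob_space M by fact
  have "\<bar>\<integral>x. f x \<partial>M\<bar> \<le> (\<integral>x. \<bar>f x\<bar> \<partial>M)" by (rule integral_abs_bound)
  also have "\<dots> \<le> (\<integral>x. B \<partial>M)"
    using True assms(3) by (intro integral_mono_AE) auto
  also have "\<dots> = B" by (simp add: prob_space)
  finally show ?thesis .
next
  case False
  then show ?thesis using assms(2) by (simp add: not_integrable_integral_eq)
qed

theorem mainTheorem6:
  fixes \<mu> :: "'z measure" and loss :: "'a::euclidean_space \<Rightarrow> 'z \<Rightarrow> real"
    and grad :: "'a \<Rightarrow> 'z \<Rightarrow> 'a" and w0 :: 'a and PU :: "(nat \<Rightarrow> nat) pmf"
    and n K :: nat and c R L :: real
  assumes "prob_space \<mu>"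
    and "(\<lambda>(w, z). loss w z) \<in> borel_measurable (borel \<Otimes>\<^sub>M \<mu>)"
    and "\<And>w z. ((\<lambda>v. loss v z) has_derivative (\<lambda>h. grad w z \<bullet> h)) (at w)"
    and "R \<ge> 0"
    and "\<And>w. subgaussian \<mu> (loss w) R"
    and "\<And>w z. norm (grad w z) \<le> L"
    and "n \<ge> 1" and "K \<ge> 2" and "c > 0"
    and "\<And>u k. u \<in> set_pmf PU \<Longrightarrow> k \<in> {1..K} \<Longrightarrow>
           bij_betw (\<lambda>j. u ((k - 1) * n + j)) {1..n} {1..n}"
  shows "\<bar>sgld_gen \<mu> loss grad w0 (\<lambda>t. c / real t) (\<lambda>t. sqrt (c / real t)) PU n (n * K)\<bar>
         \<le> R * L * sqrt c / real n *
           (\<Sum>i=1..n. sqrt (1 / real i + (ln (real K - 1) + 1) / real n))"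
proof -
  note A = assms(1-6)
  have n1: "n \<ge> 1" and K2: "K \<ge> 2" and c0: "c > 0" using assms(7,8,9) by auto
  note bij = assms(10)
  define T where "T = n * K"
  define SM where "SM = PiM {1..n} (\<lambda>_. \<mu>)"
  define XM where "XM = PiM {1..T} (\<lambda>_. std_gauss :: 'a measure)"
  define PM where "PM = measure_pmf PU"
  define Cn where "Cn = (ln (real K - 1) + 1) / real n"
  define B where "B = R * L * sqrt c / real n * (\<Sum>i=1..n. sqrt (1 / real i + Cn))"
  define F where "F = (\<lambda>(s, u, xi). (let W = sgld_traj w0 (\<lambda>t. c / real t) (\<lambda>t. sqrt (c / real t)) grad s u xi T in
                      pop_risk \<mu> loss W - emp_risk loss n s W))"
  have L0: "L \<ge> 0" using assms(6)[of undefined undefined] norm_ge_zero by (rule order_trans[rotated])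
  have Cn0: "Cn \<ge> 0"
  proof -
    have "real K - 1 \<ge> 1" using K2 by simp
    then have "ln (real K - 1) \<ge> 0" by simp
    then show ?thesis unfolding Cn_def using n1 by simp
  qed
  have B0: "B \<ge> 0" unfolding B_def using assms(4) L0 c0 n1 Cn0
    by (intro mult_nonneg_nonneg divide_nonneg_pos sum_nonneg) auto
  interpret SMp: prob_space SM unfolding SM_def by (rule prob_space_PiM) (use assms(1) in auto)
  interpret XMp: prob_space XM unfolding XM_def by (rule prob_space_PiM) (use prob_space_std_gauss in auto)
  interpret PMp: prob_space PM unfolding PM_def by (rule prob_space_measure_pmf)
  interpret PX: pair_prob_space PM XM ..
  interpret SX: pair_prob_space SM XM ..
  interpret SPX: pair_prob_space SM "PM \<Otimes>\<^sub>M XM" ..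
  have ub: "\<bar>\<integral>p. F (fst p, u, snd p) \<partial>(SM \<Otimes>\<^sub>M XM)\<bar> \<le> B"
    and ui: "integrable (SM \<Otimes>\<^sub>M XM) (\<lambda>p. F (fst p, u, snd p))"
    if u: "u \<in> set_pmf PU" for u
  proof -
    have uok: "u t \<in> {1..n}" if t: "t \<in> {1..T}" for t
    proof -
      define q where "q = (t - 1) div n"
      define r where "r = (t - 1) mod n"
      have n0: "n > 0" using n1 by simp
      have qr: "t - 1 = q * n + r" unfolding q_def r_def by simp
      have rn: "r < n" unfolding r_def using n0 by simp
      have "t \<le> K * n" "t \<ge> 1" using t unfolding T_def by (auto simp: mult.commute)
      then have "t - 1 < K * n" by linarith
      then have qK: "q < K" unfolding q_def using n0 by (simp add: div_less_iff_less_mult)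
      define k where "k = q + 1"
      define j where "j = r + 1"
      have k: "k \<in> {1..K}" unfolding k_def using qK by simp
      have j: "j \<in> {1..n}" unfolding j_def using rn by simp
      have tj: "t = (k - 1) * n + j"
      proof -
        have "t \<ge> 1" using t by simp
        then have "t = q * n + r + 1" using qr by linarith
        then show ?thesis unfolding k_def j_def by simp
      qed
      show ?thesis using bij_betwE[OF bij[OF u k]] j tj by auto
    qed
    have Feq: "F (fst p, u, snd p) = pop_risk \<mu> loss (sgld_traj w0 (\<lambda>t. c / real t) (\<lambda>t. sqrt (c / real t)) grad (fst p) u (snd p) T)
        - emp_risk loss n (fst p) (sgld_traj w0 (\<lambda>t. c / real t) (\<lambda>t. sqrt (c / real t)) grad (fst p) u (snd p) T)" for p
      unfolding F_def by (simp add: Let_def)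
    note pu = per_u[OF A c0 uok n1, where ?w0.0=w0]
    show "integrable (SM \<Otimes>\<^sub>M XM) (\<lambda>p. F (fst p, u, snd p))"
      unfolding Feq SM_def XM_def by (rule pu(1))
    have "\<bar>\<integral>p. F (fst p, u, snd p) \<partial>(SM \<Otimes>\<^sub>M XM)\<bar>
        \<le> R * L / real n * (\<Sum>i=1..n. sqrt (c * (\<Sum>k=1..T. (if u k = i then 1 / real k else 0))))"
      unfolding Feq SM_def XM_def by (rule pu(2))
    also have "\<dots> \<le> B"
    proof -
      have bu: "bij_betw u {1..n} {1..n}" using bij[OF u, of 1] K2 by simp
      have "(\<Sum>i=1..n. sqrt (c * (\<Sum>k=1..T. (if u k = i then 1 / real k else 0))))
          = (\<Sum>j=1..n. sqrt (c * (\<Sum>k=1..T. (if u k = u j then 1 / real k else 0))))"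
        by (rule sum.reindex_bij_betw[OF bu, symmetric])
      also have "\<dots> \<le> (\<Sum>j=1..n. sqrt c * sqrt (1 / real j + Cn))"
      proof (rule sum_mono)
        fix j assume j: "j \<in> {1..n}"
        have "(\<Sum>k=1..T. (if u k = u j then 1 / real k else 0)) \<le> 1 / real j + Cn"
          unfolding T_def Cn_def by (rule S_bound[OF n1 K2 bij[OF u] j])
        then have "sqrt (c * (\<Sum>k=1..T. (if u k = u j then 1 / real k else 0))) \<le> sqrt (c * (1 / real j + Cn))"
          using c0 by (intro real_sqrt_le_mono mult_left_mono) auto
        then show "sqrt (c * (\<Sum>k=1..T. (if u k = u j then 1 / real k else 0))) \<le> sqrt c * sqrt (1 / real j + Cn)"
          by (simp add: real_sqrt_mult)
      qed
      finally have "R * L / real n * (\<Sum>i=1..n. sqrt (c * (\<Sum>k=1..T. (if u k = i then 1 / real k else 0))))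
          \<le> R * L / real n * (\<Sum>j=1..n. sqrt c * sqrt (1 / real j + Cn))"
        using assms(4) L0 by (intro mult_left_mono) auto
      also have "\<dots> = B"
      proof -
        have "(\<Sum>j=1..n. sqrt c * sqrt (1 / real j + Cn)) = sqrt c * (\<Sum>j=1..n. sqrt (1 / real j + Cn))"
          by (rule sum_distrib_left[symmetric])
        then show ?thesis unfolding B_def by simp
      qed
      finally show ?thesis .
    qed
    finally show "\<bar>\<integral>p. F (fst p, u, snd p) \<partial>(SM \<Otimes>\<^sub>M XM)\<bar> \<le> B" .
  qed
  have gen_eq: "sgld_gen \<mu> loss grad w0 (\<lambda>t. c / real t) (\<lambda>t. sqrt (c / real t)) PU n (n * K)
      = (\<integral>x. F x \<partial>(SM \<Otimes>\<^sub>M (PM \<Otimes>\<^sub>M XM)))"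
    unfolding sgld_gen_def F_def SM_def XM_def PM_def T_def ..
  show ?thesis
  proof (cases "integrable (SM \<Otimes>\<^sub>M (PM \<Otimes>\<^sub>M XM)) F")
    case False
    then show ?thesis unfolding gen_eq B_def[symmetric] Cn_def[symmetric]
      using B0 by (simp add: not_integrable_integral_eq)
  next
    case True
    have Fc: "integrable (SM \<Otimes>\<^sub>M (PM \<Otimes>\<^sub>M XM)) (case_prod (\<lambda>s y. F (s, y)))" using True by simp
    have "(\<integral>x. F x \<partial>(SM \<Otimes>\<^sub>M (PM \<Otimes>\<^sub>M XM))) = (\<integral>y. (\<integral>s. F (s, y) \<partial>SM) \<partial>(PM \<Otimes>\<^sub>M XM))"
      using SPX.integral_snd[OF Fc] by simp
    also have "\<dots> = (\<integral>u. (\<integral>xi. (\<integral>s. F (s, u, xi) \<partial>SM) \<partial>XM) \<partial>PM)"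
      using PX.integral_fst'[OF SPX.integrable_snd[OF Fc]] by simp
    finally have eq2: "(\<integral>x. F x \<partial>(SM \<Otimes>\<^sub>M (PM \<Otimes>\<^sub>M XM))) = (\<integral>u. (\<integral>xi. (\<integral>s. F (s, u, xi) \<partial>SM) \<partial>XM) \<partial>PM)" .
    have "\<bar>\<integral>u. (\<integral>xi. (\<integral>s. F (s, u, xi) \<partial>SM) \<partial>XM) \<partial>PM\<bar> \<le> B"
    proof (rule abs_integral_AE_bound[OF PMp.prob_space_axioms B0])
      show "AE u in PM. \<bar>\<integral>xi. (\<integral>s. F (s, u, xi) \<partial>SM) \<partial>XM\<bar> \<le> B"
        unfolding PM_def AE_measure_pmf_iff
      proof
        fix u assume u: "u \<in> set_pmf PU"
        have "(\<integral>xi. (\<integral>s. F (s, u, xi) \<partial>SM) \<partial>XM) = (\<integral>p. F (fst p, u, snd p) \<partial>(SM \<Otimes>\<^sub>M XM))"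
        proof -
          have e: "(\<lambda>(s, xi). F (s, u, xi)) = (\<lambda>p. F (fst p, u, snd p))" by (rule ext) (simp add: case_prod_beta)
          have "integrable (SM \<Otimes>\<^sub>M XM) (\<lambda>(s, xi). F (s, u, xi))" unfolding e by (rule ui[OF u])
          from SX.integral_snd[OF this] show ?thesis unfolding e .
        qed
        then show "\<bar>\<integral>xi. (\<integral>s. F (s, u, xi) \<partial>SM) \<partial>XM\<bar> \<le> B" using ub[OF u] by simp
      qed
    qed
    then show ?thesis unfolding gen_eq eq2 B_def Cn_def .
  qed
qed

end
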